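(* Let $L=[c,d]\subset\mathbb{R}$ with $c<d$ and $k\in\{0,1,2,\dots\}\cup\{\infty\}$. Then each of the classes $U_2(L,k)$, $U_3(L,k)$, $U_4(L,k)$, $U_5(L,k)$ is a dense $G_\delta$ subset of $C^k(L)$.
   Context: $C^k(L)$ is the space of $u:L\to\mathbb{C}$ that are $k$ times continuously differentiable on $[c,d]$, with seminorms $\sup_{x\in L}|u^{(l)}(x)|$, integers $0\le l\le k$. $D(z_0,r)$ is the open disk of center $z_0$ and radius $r$. For $z_0\in L$, $r>0$ let $\Omega(z_0,r)=D(z_0,r)\cap\{\operatorname{Im}z>0\}$, $P(z_0,r)=D(z_0,r)\cap\{\operatorname{Im}z<0\}$. $U_2(L,k)$: the $u\in C^k(L)$ for which there exist no $z_0\in L$, $r>0$ and continuous $\lambda:L\cup\Omega(z_0,r)\to\mathbb{C}$ holomorphic on $\Omega(z_0,r)$ with $\lambda=u$ on $D(z_0,r)\cap L$. $U_3(L,k)$: the same with $P(z_0,r)$ instead of $\Omega(z_0,r)$. $U_4(L,k)=U_2(L,k)\cap U_3(L,k)$. $U_5(L,k)$: the $u\in C^k(L)$ for which there exist no $z_0\in L$, $r>0$ and holomorphic $F:D(z_0,r)\to\mathbb{C}$ with $F=u$ on $D(z_0,r)\cap L$. *)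

theory Defs
  imports "HOL-Analysis.Analysis" "HOL-Library.Extended_Nat"
begin

text \<open>Functions on L = [c,d] are represented as maps real => complex that vanish
outside [c,d] (canonical representatives). D is a family of successive derivatives
(one-sided at the end points, i.e. derivatives within [c,d]); k :: enat, with
k = \<infinity> meaning C-infinity.\<close>

definition has_derivs :: "real \<Rightarrow> real \<Rightarrow> enat \<Rightarrow> (nat \<Rightarrow> real \<Rightarrow> complex) \<Rightarrow> bool" where
  "has_derivs c d k D \<longleftrightarrow>
     (\<forall>j. enat j \<le> k \<longrightarrow> continuous_on {c..d} (D j)) \<and>
     (\<forall>j x. enat j < k \<longrightarrow> x \<in> {c..d} \<longrightarrow>
        (D j has_vector_derivative D (Suc j) x) (at x within {c..d}))"

definition Ck :: "real \<Rightarrow> real \<Rightarrow> enat \<Rightarrow> (real \<Rightarrow> complex) set" where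
  "Ck c d k = {u. (\<forall>x. x \<notin> {c..d} \<longrightarrow> u x = 0) \<and> (\<exists>D. D 0 = u \<and> has_derivs c d k D)}"

text \<open>The j-th derivative of u on [c,d] (meaningful for j \<le> k).\<close>
definition Ck_deriv :: "real \<Rightarrow> real \<Rightarrow> enat \<Rightarrow> nat \<Rightarrow> (real \<Rightarrow> complex) \<Rightarrow> real \<Rightarrow> complex" where
  "Ck_deriv c d k j u = (SOME D. D 0 = u \<and> has_derivs c d k D) j"

definition Ck_seminorm :: "real \<Rightarrow> real \<Rightarrow> enat \<Rightarrow> nat \<Rightarrow> (real \<Rightarrow> complex) \<Rightarrow> real" where
  "Ck_seminorm c d k j u = (SUP x\<in>{c..d}. cmod (Ck_deriv c d k j u x))"

definition Ck_topology :: "real \<Rightarrow> real \<Rightarrow> enat \<Rightarrow> (real \<Rightarrow> complex) topology" where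
  "Ck_topology c d k = topology_generated_by
     {{v \<in> Ck c d k. Ck_seminorm c d k j (v - u) < e} | j u e. enat j \<le> k \<and> u \<in> Ck c d k \<and> e > 0}"

definition upper_half_disc :: "complex \<Rightarrow> real \<Rightarrow> complex set" where
  "upper_half_disc z0 r = ball z0 r \<inter> {z. Im z > 0}"

definition lower_half_disc :: "complex \<Rightarrow> real \<Rightarrow> complex set" where
  "lower_half_disc z0 r = ball z0 r \<inter> {z. Im z < 0}"

definition Lc :: "real \<Rightarrow> real \<Rightarrow> complex set" where
  "Lc c d = complex_of_real ` {c..d}"

definition U2 :: "real \<Rightarrow> real \<Rightarrow> enat \<Rightarrow> (real \<Rightarrow> complex) set" where
  "U2 c d k = {u \<in> Ck c d k. \<not> (\<exists>z0 r g. z0 \<in> Lc c d \<and> r > 0 \<and>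
      continuous_on (Lc c d \<union> upper_half_disc z0 r) g \<and>
      g holomorphic_on upper_half_disc z0 r \<and>
      (\<forall>x\<in>{c..d}. complex_of_real x \<in> ball z0 r \<longrightarrow> g (complex_of_real x) = u x))}"

definition U3 :: "real \<Rightarrow> real \<Rightarrow> enat \<Rightarrow> (real \<Rightarrow> complex) set" where
  "U3 c d k = {u \<in> Ck c d k. \<not> (\<exists>z0 r g. z0 \<in> Lc c d \<and> r > 0 \<and>
      continuous_on (Lc c d \<union> lower_half_disc z0 r) g \<and>
      g holomorphic_on lower_half_disc z0 r \<and>
      (\<forall>x\<in>{c..d}. complex_of_real x \<in> ball z0 r \<longrightarrow> g (complex_of_real x) = u x))}"

definition U4 :: "real \<Rightarrow> real \<Rightarrow> enat \<Rightarrow> (real \<Rightarrow> complex) set" where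
  "U4 c d k = U2 c d k \<inter> U3 c d k"

definition U5 :: "real \<Rightarrow> real \<Rightarrow> enat \<Rightarrow> (real \<Rightarrow> complex) set" where
  "U5 c d k = {u \<in> Ck c d k. \<not> (\<exists>z0 r F. z0 \<in> Lc c d \<and> r > 0 \<and>
      F holomorphic_on ball z0 r \<and>
      (\<forall>x\<in>{c..d}. complex_of_real x \<in> ball z0 r \<longrightarrow> F (complex_of_real x) = u x))}"

definition dense_gdelta :: "'a topology \<Rightarrow> 'a set \<Rightarrow> bool" where
  "dense_gdelta X S \<longleftrightarrow> gdelta_in X S \<and> X closure_of S = topspace X"

end

theory Submission
  imports Defs "HOL-Complex_Analysis.Complex_Analysis"
begin


locale ck =
  fixes c d :: real and k :: enat
  assumes cd: "c < d"
begin

lemma deriv_unique: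
  assumes "x \<in> {c..d}" "(f has_vector_derivative a) (at x within {c..d})"
    "(g has_vector_derivative b) (at x within {c..d})" "\<And>y. y \<in> {c..d} \<Longrightarrow> f y = g y"
  shows "a = b"
proof -
  have "(g has_vector_derivative a) (at x within {c..d})"
    using has_vector_derivative_transform[OF assms(1) _ assms(2), of g] assms(4) by auto
  then show ?thesis
    using vector_derivative_unique_within_closed_interval[of c d x g a b] assms cd by auto
qed

lemma derivs_unique:
  assumes "has_derivs c d k D" "has_derivs c d k E" "\<And>x. x \<in> {c..d} \<Longrightarrow> D 0 x = E 0 x"
  shows "enat j \<le> k \<Longrightarrow> x \<in> {c..d} \<Longrightarrow> D j x = E j x"
proof (induction j arbitrary: x)
  case 0
  then show ?case using assms(3) by auto
next
  case (Suc j)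
  have jk: "enat j < k" using Suc.prems(1)
    by (metis Suc_ile_eq)
  then have jk': "enat j \<le> k" by simp
  have dD: "(D j has_vector_derivative D (Suc j) x) (at x within {c..d})"
    using assms(1) jk Suc.prems(2) unfolding has_derivs_def by blast
  have dE: "(E j has_vector_derivative E (Suc j) x) (at x within {c..d})"
    using assms(2) jk Suc.prems(2) unfolding has_derivs_def by blast
  show ?case
    by (rule deriv_unique[OF Suc.prems(2) dD dE Suc.IH[OF jk']])
qed

definition Dv :: "nat \<Rightarrow> (real \<Rightarrow> complex) \<Rightarrow> real \<Rightarrow> complex" where
  "Dv j u = Ck_deriv c d k j u"

lemma Ck_D:
  assumes "u \<in> Ck c d k"
  shows "Dv 0 u = u" "has_derivs c d k (\<lambda>j. Dv j u)"
proof -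
  obtain D where "D 0 = u \<and> has_derivs c d k D" using assms unfolding Ck_def by auto
  then have "(SOME D. D 0 = u \<and> has_derivs c d k D) 0 = u \<and> has_derivs c d k (SOME D. D 0 = u \<and> has_derivs c d k D)"
    by (rule someI[where P="\<lambda>D. D 0 = u \<and> has_derivs c d k D"])
  then show "Dv 0 u = u" "has_derivs c d k (\<lambda>j. Dv j u)"
    unfolding Dv_def Ck_deriv_def by auto
qed

lemma Ck_Dv_unique:
  assumes "u \<in> Ck c d k" "D 0 = u" "has_derivs c d k D" "enat j \<le> k" "x \<in> {c..d}"
  shows "Dv j u x = D j x"
  using derivs_unique[OF Ck_D(2)[OF assms(1)] assms(3)] Ck_D(1)[OF assms(1)] assms by auto

lemma Ck_zero: "u \<in> Ck c d k \<Longrightarrow> x \<notin> {c..d} \<Longrightarrow> u x = 0"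
  unfolding Ck_def by auto

lemma Dv_cont: "u \<in> Ck c d k \<Longrightarrow> enat j \<le> k \<Longrightarrow> continuous_on {c..d} (Dv j u)"
  using Ck_D(2) unfolding has_derivs_def by auto

lemma has_derivs_add:
  assumes "has_derivs c d k D" "has_derivs c d k E"
  shows "has_derivs c d k (\<lambda>j x. D j x + E j x)"
  using assms unfolding has_derivs_def
  by (simp add: continuous_on_add has_vector_derivative_add)

lemma has_derivs_scale:
  assumes "has_derivs c d k D"
  shows "has_derivs c d k (\<lambda>j x. a * D j x)"
  using assms unfolding has_derivs_def
  by (simp add: continuous_on_mult_left has_vector_derivative_mult_right)

lemma Ck_add:
  assumes "u \<in> Ck c d k" "v \<in> Ck c d k"
  shows "(\<lambda>x. u x + v x) \<in> Ck c d k"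
    "\<And>j x. enat j \<le> k \<Longrightarrow> x \<in> {c..d} \<Longrightarrow> Dv j (\<lambda>x. u x + v x) x = Dv j u x + Dv j v x"
proof -
  have h: "has_derivs c d k (\<lambda>j x. Dv j u x + Dv j v x)"
    by (rule has_derivs_add[OF Ck_D(2)[OF assms(1)] Ck_D(2)[OF assms(2)]])
  have h0: "(\<lambda>j x. Dv j u x + Dv j v x) 0 = (\<lambda>x. u x + v x)"
    using Ck_D(1)[OF assms(1)] Ck_D(1)[OF assms(2)] by auto
  show "(\<lambda>x. u x + v x) \<in> Ck c d k"
    unfolding Ck_def using h h0 Ck_zero[OF assms(1)] Ck_zero[OF assms(2)]
    by (auto intro!: exI[of _ "(\<lambda>j x. Dv j u x + Dv j v x)"])
  then show "\<And>j x. enat j \<le> k \<Longrightarrow> x \<in> {c..d} \<Longrightarrow> Dv j (\<lambda>x. u x + v x) x = Dv j u x + Dv j v x"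
    using Ck_Dv_unique[OF _ h0 h] by auto
qed

lemma Ck_scale:
  assumes "u \<in> Ck c d k"
  shows "(\<lambda>x. a * u x) \<in> Ck c d k"
    "\<And>j x. enat j \<le> k \<Longrightarrow> x \<in> {c..d} \<Longrightarrow> Dv j (\<lambda>x. a * u x) x = a * Dv j u x"
proof -
  have h: "has_derivs c d k (\<lambda>j x. a * Dv j u x)"
    by (rule has_derivs_scale[OF Ck_D(2)[OF assms(1)]])
  have h0: "(\<lambda>j x. a * Dv j u x) 0 = (\<lambda>x. a * u x)"
    using Ck_D(1)[OF assms(1)] by auto
  show "(\<lambda>x. a * u x) \<in> Ck c d k"
    unfolding Ck_def using h h0 Ck_zero[OF assms(1)]
    by (auto intro!: exI[of _ "(\<lambda>j x. a * Dv j u x)"])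
  then show "\<And>j x. enat j \<le> k \<Longrightarrow> x \<in> {c..d} \<Longrightarrow> Dv j (\<lambda>x. a * u x) x = a * Dv j u x"
    using Ck_Dv_unique[OF _ h0 h] by auto
qed

lemma Ck_minus:
  assumes "u \<in> Ck c d k" "v \<in> Ck c d k"
  shows "u - v \<in> Ck c d k"
    "\<And>j x. enat j \<le> k \<Longrightarrow> x \<in> {c..d} \<Longrightarrow> Dv j (u - v) x = Dv j u x - Dv j v x"
proof -
  have e: "u - v = (\<lambda>x. u x + (\<lambda>x. (-1::complex) * v x) x)" by (auto simp: fun_eq_iff)
  have m: "(\<lambda>x. (-1::complex) * v x) \<in> Ck c d k" by (rule Ck_scale(1)[OF assms(2)])
  show "u - v \<in> Ck c d k" unfolding e by (rule Ck_add(1)[OF assms(1) m])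
  fix j x assume "enat j \<le> k" "x \<in> {c..d}"
  then show "Dv j (u - v) x = Dv j u x - Dv j v x"
    unfolding e using Ck_add(2)[OF assms(1) m] Ck_scale(2)[OF assms(2), where a="-1"] by auto
qed

lemma zero_Ck: "(\<lambda>x. 0) \<in> Ck c d k"
  unfolding Ck_def has_derivs_def by (auto intro!: exI[of _ "\<lambda>j x. 0"])

definition p :: "nat \<Rightarrow> (real \<Rightarrow> complex) \<Rightarrow> real" where
  "p j u = Ck_seminorm c d k j u"

lemma p_eq: "p j u = (SUP x\<in>{c..d}. cmod (Dv j u x))"
  unfolding p_def Ck_seminorm_def Dv_def by simp

lemma Dv_bounded:
  assumes "u \<in> Ck c d k" "enat j \<le> k"
  shows "bdd_above ((\<lambda>x. cmod (Dv j u x)) ` {c..d})"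
proof -
  have "compact ((\<lambda>x. cmod (Dv j u x)) ` {c..d})"
    by (intro compact_continuous_image continuous_on_norm Dv_cont assms compact_Icc)
  then show ?thesis by (meson bdd_above_Icc bdd_above_mono compact_imp_bounded bounded_imp_bdd_above)
qed

lemma p_ge:
  assumes "u \<in> Ck c d k" "enat j \<le> k" "x \<in> {c..d}"
  shows "cmod (Dv j u x) \<le> p j u"
  unfolding p_eq using Dv_bounded[OF assms(1,2)] assms(3) by (auto intro: cSUP_upper)

lemma p_le:
  assumes "\<And>x. x \<in> {c..d} \<Longrightarrow> cmod (Dv j u x) \<le> B"
  shows "p j u \<le> B"
  unfolding p_eq using assms cd by (auto intro!: cSUP_least)

lemma p_nonneg:
  assumes "u \<in> Ck c d k" "enat j \<le> k"
  shows "0 \<le> p j u"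
  using p_ge[OF assms, of c] cd by (meson atLeastAtMost_iff less_eq_real_def norm_ge_zero order_trans)

lemma p_triangle:
  assumes "u \<in> Ck c d k" "v \<in> Ck c d k" "enat j \<le> k"
  shows "p j (\<lambda>x. u x + v x) \<le> p j u + p j v"
proof (rule p_le)
  fix x assume x: "x \<in> {c..d}"
  have "cmod (Dv j (\<lambda>x. u x + v x) x) = cmod (Dv j u x + Dv j v x)"
    using Ck_add(2)[OF assms(1,2) assms(3) x] by simp
  also have "\<dots> \<le> p j u + p j v"
    using p_ge[OF assms(1,3) x] p_ge[OF assms(2,3) x]
    by (meson add_mono norm_triangle_ineq order_trans)
  finally show "cmod (Dv j (\<lambda>x. u x + v x) x) \<le> p j u + p j v" .
qed

lemma p_scale:
  assumes "u \<in> Ck c d k" "enat j \<le> k"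
  shows "p j (\<lambda>x. a * u x) \<le> cmod a * p j u"
  by (rule p_le) (use Ck_scale(2)[OF assms(1) assms(2)] p_ge[OF assms] in
      \<open>auto simp: norm_mult intro: mult_left_mono\<close>)

lemma p_diff_tri:
  assumes "u \<in> Ck c d k" "v \<in> Ck c d k" "w \<in> Ck c d k" "enat j \<le> k"
  shows "p j (u - w) \<le> p j (u - v) + p j (v - w)"
proof (rule p_le)
  fix x assume x: "x \<in> {c..d}"
  have e1: "Dv j (u - w) x = Dv j u x - Dv j w x" by (rule Ck_minus(2)[OF assms(1,3) assms(4) x])
  have e2: "Dv j (u - v) x = Dv j u x - Dv j v x" by (rule Ck_minus(2)[OF assms(1,2) assms(4) x])
  have e3: "Dv j (v - w) x = Dv j v x - Dv j w x" by (rule Ck_minus(2)[OF assms(2,3) assms(4) x])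
  have "cmod (Dv j (u - w) x) = cmod (Dv j (u - v) x + Dv j (v - w) x)"
    unfolding e1 e2 e3 by (simp add: algebra_simps)
  also have "\<dots> \<le> p j (u - v) + p j (v - w)"
    using p_ge[OF Ck_minus(1)[OF assms(1,2)] assms(4) x] p_ge[OF Ck_minus(1)[OF assms(2,3)] assms(4) x]
    by (meson add_mono norm_triangle_ineq order_trans)
  finally show "cmod (Dv j (u - w) x) \<le> p j (u - v) + p j (v - w)" .
qed

lemma p_sym:
  assumes "u \<in> Ck c d k" "v \<in> Ck c d k" "enat j \<le> k"
  shows "p j (u - v) = p j (v - u)"
proof -
  have "cmod (Dv j (u - v) x) = cmod (Dv j (v - u) x)" if x: "x \<in> {c..d}" for x
  proof -
    have e1: "Dv j (u - v) x = Dv j u x - Dv j v x" by (rule Ck_minus(2)[OF assms(1,2) assms(3) x])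
    have e2: "Dv j (v - u) x = Dv j v x - Dv j u x" by (rule Ck_minus(2)[OF assms(2,1) assms(3) x])
    show ?thesis unfolding e1 e2 by (rule norm_minus_commute)
  qed
  then show ?thesis unfolding p_eq by (auto intro: SUP_cong)
qed

lemma p_self: "u \<in> Ck c d k \<Longrightarrow> enat j \<le> k \<Longrightarrow> p j (u - u) = 0"
proof -
  assume a: "u \<in> Ck c d k" "enat j \<le> k"
  have "p j (u - u) \<le> 0"
  proof (rule p_le)
    fix x assume x: "x \<in> {c..d}"
    have e1: "Dv j (u - u) x = Dv j u x - Dv j u x" by (rule Ck_minus(2)[OF a(1) a(1) a(2) x])
    show "cmod (Dv j (u - u) x) \<le> 0" unfolding e1 by simp
  qed
  then show ?thesis using p_nonneg[OF Ck_minus(1)[OF a(1) a(1)] a(2)] by simp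
qed

end


context ck
begin

definition J :: "nat set" where "J = {j. enat j \<le> k}"

lemma J0: "0 \<in> J" unfolding J_def by (simp add: zero_enat_def[symmetric])

definition trm :: "nat \<Rightarrow> (real \<Rightarrow> complex) \<Rightarrow> (real \<Rightarrow> complex) \<Rightarrow> real" where
  "trm j u v = min 1 (p j (u - v)) / 2 ^ j"

lemma div_pow_le: "0 \<le> (a::real) \<Longrightarrow> a / 2 ^ j \<le> a"
proof -
  assume a: "0 \<le> a"
  have "a * 1 \<le> a * 2 ^ j" using mult_left_mono[of 1 "2^j" a] a by simp
  then show ?thesis by (simp add: divide_le_eq)
qed

definition dC :: "(real \<Rightarrow> complex) \<Rightarrow> (real \<Rightarrow> complex) \<Rightarrow> real" where
  "dC u v = (if u \<in> Ck c d k \<and> v \<in> Ck c d k then (SUP j\<in>J. trm j u v) else 0)"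

lemma trm_le1: "trm j u v \<le> 1"
proof -
  have "min 1 (p j (u - v)) \<le> 1" by simp
  also have "1 \<le> (2::real) ^ j" by simp
  finally show ?thesis unfolding trm_def by (simp add: divide_le_eq_1)
qed

lemma trm_le_pow: "trm j u v \<le> 1 / 2 ^ j"
  unfolding trm_def by (simp add: divide_right_mono)

lemma trm_bdd: "bdd_above ((\<lambda>j. trm j u v) ` J)"
  by (rule bdd_aboveI[where M=1]) (auto simp: trm_le1)

lemma trm_nonneg: "u \<in> Ck c d k \<Longrightarrow> v \<in> Ck c d k \<Longrightarrow> j \<in> J \<Longrightarrow> 0 \<le> trm j u v"
  unfolding trm_def J_def using p_nonneg[OF Ck_minus(1)] by simp

lemma dC_ge: "u \<in> Ck c d k \<Longrightarrow> v \<in> Ck c d k \<Longrightarrow> j \<in> J \<Longrightarrow> trm j u v \<le> dC u v"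
  unfolding dC_def using trm_bdd by (auto intro: cSUP_upper)

lemma dC_le: "u \<in> Ck c d k \<Longrightarrow> v \<in> Ck c d k \<Longrightarrow> (\<And>j. j \<in> J \<Longrightarrow> trm j u v \<le> B) \<Longrightarrow> dC u v \<le> B"
  unfolding dC_def using J0 by (auto intro!: cSUP_least)

lemma trm_sym: "u \<in> Ck c d k \<Longrightarrow> v \<in> Ck c d k \<Longrightarrow> j \<in> J \<Longrightarrow> trm j u v = trm j v u"
  unfolding trm_def J_def using p_sym by simp

lemma trm_tri:
  assumes "u \<in> Ck c d k" "v \<in> Ck c d k" "w \<in> Ck c d k" "j \<in> J"
  shows "trm j u w \<le> trm j u v + trm j v w"
proof -
  have jk: "enat j \<le> k" using assms(4) unfolding J_def by simp
  have "p j (u - w) \<le> p j (u - v) + p j (v - w)" by (rule p_diff_tri[OF assms(1-3) jk])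
  moreover have "0 \<le> p j (u - v)" "0 \<le> p j (v - w)"
    using p_nonneg[OF Ck_minus(1)[OF assms(1,2)] jk] p_nonneg[OF Ck_minus(1)[OF assms(2,3)] jk] by auto
  ultimately have "min 1 (p j (u - w)) \<le> min 1 (p j (u - v)) + min 1 (p j (v - w))"
    by linarith
  then show ?thesis unfolding trm_def by (simp add: add_divide_distrib[symmetric] divide_right_mono)
qed

lemma metric: "Metric_space (Ck c d k) dC"
proof
  fix x y
  show "0 \<le> dC x y"
  proof (cases "x \<in> Ck c d k \<and> y \<in> Ck c d k")
    case True
    then show ?thesis using trm_nonneg[OF _ _ J0] dC_ge[OF _ _ J0] by (meson order_trans)
  qed (auto simp: dC_def)
  show "dC x y = dC y x"
  proof (cases "x \<in> Ck c d k \<and> y \<in> Ck c d k")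
    case True
    then have "(SUP j\<in>J. trm j x y) = (SUP j\<in>J. trm j y x)"
      using trm_sym by (intro SUP_cong) auto
    then show ?thesis unfolding dC_def using True by simp
  next
    case False
    then show ?thesis unfolding dC_def by auto
  qed
next
  fix x y assume xy: "x \<in> Ck c d k" "y \<in> Ck c d k"
  show "(dC x y = 0) = (x = y)"
  proof
    assume "dC x y = 0"
    then have "trm 0 x y \<le> 0" using dC_ge[OF xy J0] by simp
    then have p0: "p 0 (x - y) \<le> 0" unfolding trm_def by simp
    show "x = y"
    proof
      fix t
      show "x t = y t"
      proof (cases "t \<in> {c..d}")
        case True
        have "cmod (Dv 0 (x - y) t) \<le> 0"
          using p_ge[OF Ck_minus(1)[OF xy] _ True, of 0] p0 by (simp add: zero_enat_def[symmetric] del: norm_le_zero_iff)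
        then show ?thesis using Ck_D(1)[OF Ck_minus(1)[OF xy]] by simp
      next
        case False
        then show ?thesis using Ck_zero[OF xy(1) False] Ck_zero[OF xy(2) False] by simp
      qed
    qed
  next
    assume "x = y"
    have "dC x y \<le> 0"
    proof (rule dC_le[OF xy])
      fix j assume "j \<in> J"
      then show "trm j x y \<le> 0" using p_self[OF xy(1)] \<open>x = y\<close> unfolding trm_def J_def by simp
    qed
    moreover have "0 \<le> dC x y" using trm_nonneg[OF xy J0] dC_ge[OF xy J0] by linarith
    ultimately show "dC x y = 0" by linarith
  qed
next
  fix x y z assume xyz: "x \<in> Ck c d k" "y \<in> Ck c d k" "z \<in> Ck c d k"
  show "dC x z \<le> dC x y + dC y z"
  proof (rule dC_le[OF xyz(1,3)])
    fix j assume j: "j \<in> J"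
    show "trm j x z \<le> dC x y + dC y z"
      using trm_tri[OF xyz j] dC_ge[OF xyz(1,2) j] dC_ge[OF xyz(2,3) j] by linarith
  qed
qed

interpretation CM: Metric_space "Ck c d k" dC by (rule metric)

definition basis where
  "basis = {{v \<in> Ck c d k. Ck_seminorm c d k j (v - u) < e} | j u e. enat j \<le> k \<and> u \<in> Ck c d k \<and> e > 0}"

lemma basis_mopen:
  assumes "B \<in> basis" shows "openin CM.mtopology B"
proof -
  obtain j u e where B: "B = {v \<in> Ck c d k. p j (v - u) < e}" and jk: "enat j \<le> k"
    and u: "u \<in> Ck c d k" and e: "e > 0"
    using assms unfolding basis_def p_def by auto
  have jJ: "j \<in> J" using jk unfolding J_def by simp
  show ?thesis unfolding CM.openin_mtopology
  proof (intro conjI allI impI)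
    show "B \<subseteq> Ck c d k" unfolding B by auto
    fix v assume vB: "v \<in> B"
    then have v: "v \<in> Ck c d k" and pv: "p j (v - u) < e" unfolding B by auto
    define r where "r = min 1 (e - p j (v - u)) / 2 ^ j"
    have r: "r > 0" unfolding r_def using pv by simp
    have "CM.mball v r \<subseteq> B"
    proof
      fix w assume "w \<in> CM.mball v r"
      then have w: "w \<in> Ck c d k" and dw: "dC v w < r" by auto
      have "trm j v w < r" using dC_ge[OF v w jJ] dw by linarith
      then have "min 1 (p j (v - w)) < min 1 (e - p j (v - u))"
        unfolding trm_def r_def by (simp add: divide_less_cancel)
      then have "p j (v - w) < e - p j (v - u)" by linarith
      moreover have "p j (w - u) \<le> p j (w - v) + p j (v - u)" by (rule p_diff_tri[OF w v u jk])
      moreover have "p j (w - v) = p j (v - w)" by (rule p_sym[OF w v jk])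
      ultimately have "p j (w - u) < e" by linarith
      then show "w \<in> B" unfolding B using w by simp
    qed
    then show "\<exists>r>0. CM.mball v r \<subseteq> B" using r by blast
  qed
qed

lemma topology_eq_metric: "Ck_topology c d k = CM.mtopology"
proof (rule topology_eq[THEN iffD2], intro allI iffI)
  fix U
  assume "openin (Ck_topology c d k) U"
  then have "generate_topology_on basis U"
    unfolding Ck_topology_def basis_def by (simp add: openin_topology_generated_by_iff)
  then show "openin CM.mtopology U"
    using generate_topology_on_coarsest[of "openin CM.mtopology" basis U] istopology_openin basis_mopen
    by blast
next
  fix U assume U: "openin CM.mtopology U"
  have nb: "\<exists>N. x \<in> N \<and> N \<subseteq> U \<and> generate_topology_on basis N" if x: "x \<in> U" for x
  proof -
    obtain r where r: "r > 0" "CM.mball x r \<subseteq> U" using U x unfolding CM.openin_mtopology by auto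
    have xM: "x \<in> Ck c d k" using U x unfolding CM.openin_mtopology by auto
    obtain N :: nat where N: "2 / r < 2 ^ N"
      using real_arch_pow[of 2 "2 / r"] by auto
    have Nr: "1 / 2 ^ N < r / 2" using N r by (simp add: field_simps)
    define F where "F = (\<lambda>j. {v \<in> Ck c d k. p j (v - x) < r / 2}) ` (J \<inter> {..N})"
    have fin: "finite F" unfolding F_def by simp
    have ne: "F \<noteq> {}" unfolding F_def using J0 by auto
    have gen: "generate_topology_on basis (\<Inter>F)"
    proof (rule generate_topology_on_Inter[OF fin _ ne])
      fix K assume "K \<in> F"
      then obtain j where j: "j \<in> J" and K: "K = {v \<in> Ck c d k. p j (v - x) < r / 2}"
        unfolding F_def by auto
      have "K \<in> basis" unfolding basis_def K p_def using j xM r unfolding J_def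
        by (intro CollectI exI[of _ j] exI[of _ x] exI[of _ "r/2"]) auto
      then show "generate_topology_on basis K" by (rule generate_topology_on.Basis)
    qed
    have xin: "x \<in> \<Inter>F" unfolding F_def using xM r p_self[OF xM] unfolding J_def by auto
    have sub: "\<Inter>F \<subseteq> U"
    proof
      fix v assume v: "v \<in> \<Inter>F"
      have vM: "v \<in> Ck c d k" using v ne unfolding F_def by auto
      have "dC x v \<le> r / 2"
      proof (rule dC_le[OF xM vM])
        fix j assume j: "j \<in> J"
        show "trm j x v \<le> r / 2"
        proof (cases "j \<le> N")
          case True
          then have "p j (v - x) < r / 2" using v j unfolding F_def by auto
          moreover have "p j (x - v) = p j (v - x)" using p_sym[OF xM vM] j unfolding J_def by auto
          moreover have "trm j x v \<le> p j (x - v)"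
          proof -
            have "min 1 (p j (x - v)) \<le> p j (x - v)" by simp
            moreover have "0 \<le> min 1 (p j (x - v))"
              using p_nonneg[OF Ck_minus(1)[OF xM vM]] j unfolding J_def by simp
            ultimately show ?thesis unfolding trm_def using div_pow_le by (meson order_trans)
          qed
          ultimately show ?thesis by linarith
        next
          case False
          then have "(1::real) / 2 ^ j \<le> 1 / 2 ^ N" by (simp add: frac_le)
          then show ?thesis using trm_le_pow[of j x v] Nr by linarith
        qed
      qed
      then have "v \<in> CM.mball x r" using xM vM r by auto
      then show "v \<in> U" using r by auto
    qed
    show ?thesis using gen xin sub by blast
  qed
  then obtain N where N: "\<And>x. x \<in> U \<Longrightarrow> x \<in> N x \<and> N x \<subseteq> U \<and> generate_topology_on basis (N x)"
    by metis
  have "U = \<Union>(N ` U)" using N by blast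
  moreover have "generate_topology_on basis (\<Union>(N ` U))"
    by (rule generate_topology_on.UN) (use N in auto)
  ultimately have "generate_topology_on basis U" by simp
  then show "openin (Ck_topology c d k) U"
    unfolding Ck_topology_def basis_def by (simp add: openin_topology_generated_by_iff)
qed

end


context ck
begin

interpretation CM: Metric_space "Ck c d k" dC by (rule metric)

lemma p_small:
  assumes "u \<in> Ck c d k" "v \<in> Ck c d k" "j \<in> J" "0 < e" "e \<le> 1" "dC u v < e / 2 ^ j"
  shows "p j (u - v) < e"
proof -
  have "trm j u v < e / 2 ^ j" using dC_ge[OF assms(1-3)] assms(6) by linarith
  then have "min 1 (p j (u - v)) < e" unfolding trm_def by (simp add: divide_less_cancel)
  then show ?thesis using assms(5) by linarith
qed

lemma trm_le_p:
  assumes "u \<in> Ck c d k" "v \<in> Ck c d k" "j \<in> J"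
  shows "trm j u v \<le> p j (u - v)"
proof -
  have "0 \<le> min 1 (p j (u - v))"
    using p_nonneg[OF Ck_minus(1)[OF assms(1,2)]] assms(3) unfolding J_def by simp
  then have "trm j u v \<le> min 1 (p j (u - v))" unfolding trm_def by (rule div_pow_le)
  then show ?thesis by linarith
qed

lemma Dv_diff_le:
  assumes "u \<in> Ck c d k" "v \<in> Ck c d k" "j \<in> J" "x \<in> {c..d}"
  shows "cmod (Dv j u x - Dv j v x) \<le> p j (u - v)"
proof -
  have jk: "enat j \<le> k" using assms(3) unfolding J_def by simp
  have "Dv j (u - v) x = Dv j u x - Dv j v x" by (rule Ck_minus(2)[OF assms(1,2) jk assms(4)])
  then show ?thesis using p_ge[OF Ck_minus(1)[OF assms(1,2)] jk assms(4)] by simp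
qed

lemma complete: "CM.mcomplete"
  unfolding CM.mcomplete_def
proof (intro allI impI)
  fix \<sigma> assume cauchy: "CM.MCauchy \<sigma>"
  have \<sigma>M: "\<And>n. \<sigma> n \<in> Ck c d k" using cauchy unfolding CM.MCauchy_def by auto
  have "\<exists>F. uniform_limit {c..d} (\<lambda>n. Dv j (\<sigma> n)) F sequentially" if j: "j \<in> J" for j
  proof -
    have "uniformly_Cauchy_on {c..d} (\<lambda>n. Dv j (\<sigma> n))"
      unfolding uniformly_Cauchy_on_def
    proof (intro allI impI)
      fix e :: real assume e: "0 < e"
      define e' where "e' = min 1 e"
      have e': "0 < e'" "e' \<le> 1" "e' \<le> e" unfolding e'_def using e by auto
      obtain N where N: "\<And>n n'. N \<le> n \<Longrightarrow> N \<le> n' \<Longrightarrow> dC (\<sigma> n) (\<sigma> n') < e' / 2 ^ j"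
        using cauchy e'(1) unfolding CM.MCauchy_def by (meson divide_pos_pos zero_less_numeral zero_less_power)
      show "\<exists>M. \<forall>x\<in>{c..d}. \<forall>m\<ge>M. \<forall>n\<ge>M. dist (Dv j (\<sigma> m) x) (Dv j (\<sigma> n) x) < e"
      proof (intro exI[of _ N] ballI allI impI)
        fix x m n assume x: "x \<in> {c..d}" and mn: "N \<le> m" "N \<le> n"
        have "p j (\<sigma> m - \<sigma> n) < e'" by (rule p_small[OF \<sigma>M \<sigma>M j e'(1,2) N[OF mn]])
        then show "dist (Dv j (\<sigma> m) x) (Dv j (\<sigma> n) x) < e"
          using Dv_diff_le[OF \<sigma>M \<sigma>M j x, of m n] e'(3) by (simp add: dist_norm)
      qed
    qed
    then show ?thesis using Cauchy_uniformly_convergent unfolding uniformly_convergent_on_def by blast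
  qed
  then obtain F where F: "\<And>j. j \<in> J \<Longrightarrow> uniform_limit {c..d} (\<lambda>n. Dv j (\<sigma> n)) (F j) sequentially"
    by metis
  have Fpt: "(\<lambda>n. Dv j (\<sigma> n) x) \<longlonglongrightarrow> F j x" if "j \<in> J" "x \<in> {c..d}" for j x
    using tendsto_uniform_limitI[OF F[OF that(1)] that(2)] .
  define u where "u = (\<lambda>x. if x \<in> {c..d} then F 0 x else 0)"
  define D where "D = (\<lambda>j. if j = 0 then u else F j)"
  have DF: "D j x = F j x" if "x \<in> {c..d}" for j x
    using that unfolding D_def u_def by auto
  have Dcont: "continuous_on {c..d} (D j)" if j: "j \<in> J" for j
  proof -
    have "continuous_on {c..d} (F j)"
    proof (rule uniform_limit_theorem[OF _ F[OF j]])
      show "\<forall>\<^sub>F n in sequentially. continuous_on {c..d} (Dv j (\<sigma> n))"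
        using Dv_cont[OF \<sigma>M] j unfolding J_def by simp
    qed simp
    then show ?thesis by (rule continuous_on_eq) (use DF in auto)
  qed
  have Dder: "(D j has_vector_derivative D (Suc j) x) (at x within {c..d})"
    if jk: "enat j < k" and x: "x \<in> {c..d}" for j x
  proof -
    have j: "j \<in> J" and sj: "Suc j \<in> J" using jk unfolding J_def by (auto simp: Suc_ile_eq)
    have der: "\<And>n x. x \<in> {c..d} \<Longrightarrow> (Dv j (\<sigma> n) has_derivative (\<lambda>h. h *\<^sub>R Dv (Suc j) (\<sigma> n) x)) (at x within {c..d})"
      using Ck_D(2)[OF \<sigma>M] jk unfolding has_derivs_def has_vector_derivative_def by blast
    have nle: "\<forall>\<^sub>F n in sequentially. \<forall>x\<in>{c..d}. \<forall>h. norm (h *\<^sub>R Dv (Suc j) (\<sigma> n) x - h *\<^sub>R F (Suc j) x) \<le> e * norm h"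
      if e: "e > 0" for e
    proof -
      have "\<forall>\<^sub>F n in sequentially. \<forall>x\<in>{c..d}. dist (Dv (Suc j) (\<sigma> n) x) (F (Suc j) x) < e"
        using F[OF sj] e unfolding uniform_limit_iff by blast
      then show ?thesis
      proof (rule eventually_mono)
        fix n assume a: "\<forall>x\<in>{c..d}. dist (Dv (Suc j) (\<sigma> n) x) (F (Suc j) x) < e"
        show "\<forall>x\<in>{c..d}. \<forall>h. norm (h *\<^sub>R Dv (Suc j) (\<sigma> n) x - h *\<^sub>R F (Suc j) x) \<le> e * norm h"
        proof (intro ballI allI)
          fix x h assume x: "x \<in> {c..d}"
          have "norm (h *\<^sub>R Dv (Suc j) (\<sigma> n) x - h *\<^sub>R F (Suc j) x) = \<bar>h\<bar> * dist (Dv (Suc j) (\<sigma> n) x) (F (Suc j) x)"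
            by (simp add: dist_norm scaleR_diff_right[symmetric])
          also have "\<dots> \<le> \<bar>h\<bar> * e" using a x by (simp add: mult_left_mono less_imp_le)
          finally show "norm (h *\<^sub>R Dv (Suc j) (\<sigma> n) x - h *\<^sub>R F (Suc j) x) \<le> e * norm h"
            by (simp add: mult.commute)
        qed
      qed
    qed
    have c0: "c \<in> {c..d}" using cd by simp
    obtain g where g: "\<And>x. x \<in> {c..d} \<Longrightarrow> (\<lambda>n. Dv j (\<sigma> n) x) \<longlonglongrightarrow> g x \<and>
        (g has_derivative (\<lambda>h. h *\<^sub>R F (Suc j) x)) (at x within {c..d})"
      using has_derivative_sequence[OF convex_real_interval(5) der nle c0 Fpt[OF j c0]] by blast
    have gF: "g y = D j y" if "y \<in> {c..d}" for y
      using LIMSEQ_unique[OF conjunct1[OF g[OF that]] Fpt[OF j that]] DF[OF that] by simp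
    have "(g has_vector_derivative F (Suc j) x) (at x within {c..d})"
      using g[OF x] unfolding has_vector_derivative_def by blast
    then have "(D j has_vector_derivative F (Suc j) x) (at x within {c..d})"
      using has_vector_derivative_transform[OF x, of "D j" g] gF by auto
    then show ?thesis using DF[OF x] by simp
  qed
  have hd: "has_derivs c d k D"
    unfolding has_derivs_def using Dcont Dder unfolding J_def by auto
  have uM: "u \<in> Ck c d k"
    unfolding Ck_def using hd by (auto simp: u_def D_def intro!: exI[of _ D])
  have D0: "D 0 = u" unfolding D_def by simp
  have Dvu: "Dv j u x = F j x" if "j \<in> J" "x \<in> {c..d}" for j x
    using Ck_Dv_unique[OF uM D0 hd _ that(2)] that DF unfolding J_def by auto
  have "limitin CM.mtopology \<sigma> u sequentially"
    unfolding CM.limitin_metric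
  proof (intro conjI allI impI uM)
    fix \<epsilon> :: real assume \<epsilon>: "\<epsilon> > 0"
    obtain N0 :: nat where N0: "2 / \<epsilon> < 2 ^ N0"
      using real_arch_pow[of 2 "2 / \<epsilon>"] by auto
    have N0e: "1 / 2 ^ N0 < \<epsilon> / 2" using N0 \<epsilon> by (simp add: field_simps)
    have "\<forall>j\<in>J \<inter> {..N0}. \<forall>\<^sub>F n in sequentially. \<forall>x\<in>{c..d}. dist (Dv j (\<sigma> n) x) (F j x) < \<epsilon> / 2"
    proof
      fix j assume "j \<in> J \<inter> {..N0}"
      then have "uniform_limit {c..d} (\<lambda>n. Dv j (\<sigma> n)) (F j) sequentially" using F by auto
      moreover have "\<epsilon> / 2 > 0" using \<epsilon> by simp
      ultimately show "\<forall>\<^sub>F n in sequentially. \<forall>x\<in>{c..d}. dist (Dv j (\<sigma> n) x) (F j x) < \<epsilon> / 2"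
        unfolding uniform_limit_iff by blast
    qed
    then have ev: "\<forall>\<^sub>F n in sequentially. \<forall>j\<in>J \<inter> {..N0}. \<forall>x\<in>{c..d}. dist (Dv j (\<sigma> n) x) (F j x) < \<epsilon> / 2"
      by (intro eventually_ball_finite) auto
    show "\<forall>\<^sub>F n in sequentially. \<sigma> n \<in> Ck c d k \<and> dC (\<sigma> n) u < \<epsilon>"
      using ev
    proof (rule eventually_mono)
      fix n assume a: "\<forall>j\<in>J \<inter> {..N0}. \<forall>x\<in>{c..d}. dist (Dv j (\<sigma> n) x) (F j x) < \<epsilon> / 2"
      have "dC (\<sigma> n) u \<le> \<epsilon> / 2"
      proof (rule dC_le[OF \<sigma>M uM])
        fix j assume j: "j \<in> J"
        show "trm j (\<sigma> n) u \<le> \<epsilon> / 2"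
        proof (cases "j \<le> N0")
          case True
          have "p j (\<sigma> n - u) \<le> \<epsilon> / 2"
          proof (rule p_le)
            fix x assume x: "x \<in> {c..d}"
            have jk: "enat j \<le> k" using j unfolding J_def by simp
            have "Dv j (\<sigma> n - u) x = Dv j (\<sigma> n) x - F j x"
              using Ck_minus(2)[OF \<sigma>M uM jk x] Dvu[OF j x] by simp
            then show "cmod (Dv j (\<sigma> n - u) x) \<le> \<epsilon> / 2"
              using a j True x by (force simp: dist_norm)
          qed
          then show ?thesis using trm_le_p[OF \<sigma>M[of n] uM j] by linarith
        next
          case False
          then have "(1::real) / 2 ^ j \<le> 1 / 2 ^ N0" by (simp add: frac_le)
          then show ?thesis using trm_le_pow[of j "\<sigma> n" u] N0e by linarith
        qed
      qed
      then show "\<sigma> n \<in> Ck c d k \<and> dC (\<sigma> n) u < \<epsilon>" using \<sigma>M \<epsilon> by simp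
    qed
  qed
  then show "\<exists>x. limitin CM.mtopology \<sigma> x sequentially" by blast
qed

lemma completely_metrizable: "completely_metrizable_space (Ck_topology c d k)"
  unfolding topology_eq_metric using CM.completely_metrizable_space_mtopology complete by blast

end


definition triT :: "real \<Rightarrow> real \<Rightarrow> complex set" where
  "triT x0 \<eta> = {y. 0 \<le> Im y \<and> Re y + Im y \<le> x0 + \<eta> \<and> Im y - Re y \<le> \<eta> - x0}"

lemma triT_convex: "convex (triT x0 \<eta>)"
proof -
  have e: "triT x0 \<eta> = {y. inner (-\<i>) y \<le> 0} \<inter> {y. inner (1 + \<i>) y \<le> x0 + \<eta>} \<inter> {y. inner (\<i> - 1) y \<le> \<eta> - x0}"
    unfolding triT_def by (auto simp: inner_complex_def)
  show ?thesis unfolding e by (intro convex_Int convex_halfspace_le)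
qed

lemma triT_hull:
  assumes "\<eta> > 0"
  shows "convex hull {Complex (x0 - \<eta>) 0, Complex (x0 + \<eta>) 0, Complex x0 \<eta>} = triT x0 \<eta>"
proof
  show "convex hull {Complex (x0 - \<eta>) 0, Complex (x0 + \<eta>) 0, Complex x0 \<eta>} \<subseteq> triT x0 \<eta>"
    by (rule hull_minimal) (use triT_convex assms in \<open>auto simp: triT_def\<close>)
next
  show "triT x0 \<eta> \<subseteq> convex hull {Complex (x0 - \<eta>) 0, Complex (x0 + \<eta>) 0, Complex x0 \<eta>}"
  proof
    fix y assume y: "y \<in> triT x0 \<eta>"
    define s where "s = Re y - x0"
    define t where "t = Im y"
    have st: "0 \<le> t" "s + t \<le> \<eta>" "t - s \<le> \<eta>" using y unfolding triT_def s_def t_def by auto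
    define u where "u = (\<eta> - t - s) / (2 * \<eta>)"
    define v where "v = (\<eta> - t + s) / (2 * \<eta>)"
    define w where "w = t / \<eta>"
    have uvw: "0 \<le> u" "0 \<le> v" "0 \<le> w" "u + v + w = 1"
      using st assms unfolding u_def v_def w_def by (auto simp: divide_simps)
    have "y = u *\<^sub>R Complex (x0 - \<eta>) 0 + v *\<^sub>R Complex (x0 + \<eta>) 0 + w *\<^sub>R Complex x0 \<eta>"
      using assms unfolding u_def v_def w_def s_def t_def
      by (simp add: complex_eq_iff field_simps)
    then show "y \<in> convex hull {Complex (x0 - \<eta>) 0, Complex (x0 + \<eta>) 0, Complex x0 \<eta>}"
      unfolding convex_hull_3 using uvw by blast
  qed
qed

lemma triT_cball: "y \<in> triT x0 \<eta> \<Longrightarrow> cmod (y - of_real x0) \<le> \<eta>"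
  using cmod_le[of "y - of_real x0"] unfolding triT_def by auto

lemma triT_interior:
  assumes "\<eta> > 0" "0 < Im z" "cmod (z - of_real x0) < \<eta> / 4"
  shows "z \<in> interior (triT x0 \<eta>)"
proof -
  have "ball z (min (Im z) (\<eta> / 4)) \<subseteq> triT x0 \<eta>"
  proof
    fix y assume "y \<in> ball z (min (Im z) (\<eta> / 4))"
    then have d: "cmod (y - z) < Im z" "cmod (y - z) < \<eta> / 4" by (auto simp: dist_norm norm_minus_commute)
    have i1: "\<bar>Im (y - z)\<bar> \<le> cmod (y - z)" by (rule abs_Im_le_cmod)
    have "cmod (y - of_real x0) \<le> cmod (y - z) + cmod (z - of_real x0)"
      by (metis diff_add_cancel norm_triangle_ineq add_diff_eq)
    then have yx: "cmod (y - of_real x0) < \<eta> / 2" using d assms by linarith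
    have r1: "\<bar>Re (y - of_real x0)\<bar> \<le> cmod (y - of_real x0)" by (rule abs_Re_le_cmod)
    have r2: "\<bar>Im (y - of_real x0)\<bar> \<le> cmod (y - of_real x0)" by (rule abs_Im_le_cmod)
    show "y \<in> triT x0 \<eta>" unfolding triT_def using i1 d r1 r2 yx by auto
  qed
  then show ?thesis unfolding mem_interior using assms by (meson min_less_iff_conj zero_less_divide_iff zero_less_numeral)
qed

lemma triT_interior_Im:
  assumes "y \<in> interior (triT x0 \<eta>)"
  shows "0 < Im y"
proof -
  obtain e where e: "e > 0" "ball y e \<subseteq> triT x0 \<eta>" using assms unfolding mem_interior by auto
  have "y - \<i> * of_real (e / 2) \<in> ball y e" using e by (simp add: dist_norm norm_mult)
  then have "y - \<i> * of_real (e / 2) \<in> triT x0 \<eta>" using e by auto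
  then show ?thesis unfolding triT_def using e by auto
qed

lemma arctan_integral_bound:
  fixes y \<eta> xz x0 :: real
  assumes "y > 0" "\<eta> > 0"
  shows "((\<lambda>t. 4 * \<eta> * y / ((x0 - \<eta> + 2 * \<eta> * t - xz)\<^sup>2 + y\<^sup>2)) has_integral
     (2 * arctan ((x0 + \<eta> - xz) / y) - 2 * arctan ((x0 - \<eta> - xz) / y))) {0..1}"
proof -
  define F where "F t = 2 * arctan ((x0 - \<eta> + 2 * \<eta> * t - xz) / y)" for t
  have "(F has_vector_derivative (4 * \<eta> * y / ((x0 - \<eta> + 2 * \<eta> * t - xz)\<^sup>2 + y\<^sup>2))) (at t within {0..1})" for t
  proof -
    have "(F has_real_derivative (2 * (inverse (1 + ((x0 - \<eta> + 2 * \<eta> * t - xz) / y)\<^sup>2) * (2 * \<eta> / y)))) (at t within {0..1})"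
      unfolding F_def using assms
      by (auto intro!: derivative_eq_intros simp: field_simps)
    moreover have "2 * (inverse (1 + ((x0 - \<eta> + 2 * \<eta> * t - xz) / y)\<^sup>2) * (2 * \<eta> / y)) =
        4 * \<eta> * y / ((x0 - \<eta> + 2 * \<eta> * t - xz)\<^sup>2 + y\<^sup>2)"
      using assms by (simp add: field_simps power2_eq_square)
    ultimately show ?thesis by (simp add: has_real_derivative_iff_has_vector_derivative)
  qed
  then have "((\<lambda>t. 4 * \<eta> * y / ((x0 - \<eta> + 2 * \<eta> * t - xz)\<^sup>2 + y\<^sup>2)) has_integral (F 1 - F 0)) {0..1}"
    by (intro fundamental_theorem_of_calculus) auto
  then show ?thesis unfolding F_def by (simp add: algebra_simps)
qed


lemma seg_ab_Im:
  "\<zeta> \<in> closed_segment (Complex a1 0) (Complex a2 0) \<Longrightarrow> Im \<zeta> = 0"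
  unfolding closed_segment_def by auto

lemma seg_far_aux:
  assumes "\<eta> > 0" "Re \<zeta> - x0 + Im \<zeta> = \<eta> \<or> Im \<zeta> - (Re \<zeta> - x0) = \<eta>"
    "cmod (z - of_real x0) < \<eta> / 4"
  shows "\<eta> / 4 \<le> cmod (\<zeta> - z)"
proof -
  have r1: "\<bar>Re (\<zeta> - of_real x0)\<bar> \<le> cmod (\<zeta> - of_real x0)" by (rule abs_Re_le_cmod)
  have r2: "\<bar>Im (\<zeta> - of_real x0)\<bar> \<le> cmod (\<zeta> - of_real x0)" by (rule abs_Im_le_cmod)
  have "\<eta> \<le> 2 * cmod (\<zeta> - of_real x0)" using r1 r2 assms(2) by auto
  moreover have "cmod (\<zeta> - of_real x0) \<le> cmod (\<zeta> - z) + cmod (z - of_real x0)"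
    by (metis diff_add_cancel norm_triangle_ineq add_diff_eq)
  ultimately show ?thesis using assms(3) by linarith
qed

lemma seg_bc:
  assumes "\<zeta> \<in> closed_segment (Complex (x0 + \<eta>) 0) (Complex x0 \<eta>)"
  shows "Re \<zeta> - x0 + Im \<zeta> = \<eta>"
proof -
  obtain u where "\<zeta> = (1 - u) *\<^sub>R Complex (x0 + \<eta>) 0 + u *\<^sub>R Complex x0 \<eta>"
    using assms unfolding closed_segment_def by auto
  then have "Re \<zeta> = (1 - u) * (x0 + \<eta>) + u * x0" "Im \<zeta> = u * \<eta>" by simp_all
  then show ?thesis by (simp add: algebra_simps)
qed

lemma seg_ca:
  assumes "\<zeta> \<in> closed_segment (Complex x0 \<eta>) (Complex (x0 - \<eta>) 0)"
  shows "Im \<zeta> - (Re \<zeta> - x0) = \<eta>"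
proof -
  obtain u where "\<zeta> = (1 - u) *\<^sub>R Complex x0 \<eta> + u *\<^sub>R Complex (x0 - \<eta>) 0"
    using assms unfolding closed_segment_def by auto
  then have "Re \<zeta> = (1 - u) * x0 + u * (x0 - \<eta>)" "Im \<zeta> = (1 - u) * \<eta>" by simp_all
  then show ?thesis by (simp add: algebra_simps)
qed

lemma cmod_cnj_ge:
  assumes "0 \<le> Im w" "0 \<le> Im z"
  shows "cmod (w - z) \<le> cmod (w - cnj z)"
proof -
  have "(Im w - Im z)\<^sup>2 \<le> (Im w + Im z)\<^sup>2" using assms by (simp add: power2_eq_square algebra_simps)
  then have "(cmod (w - z))\<^sup>2 \<le> (cmod (w - cnj z))\<^sup>2" unfolding cmod_power2 by simp
  then show ?thesis by (simp add: power2_le_iff_abs_le)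
qed

lemma k_formula:
  assumes "w \<noteq> z" "w \<noteq> cnj z"
  shows "h w / (w - z) - h w / (w - cnj z) = h w * (z - cnj z) / ((w - z) * (w - cnj z))"
  using assms by (simp add: field_simps)

lemma poisson_bound:
  fixes h :: "complex \<Rightarrow> complex"
  assumes \<eta>: "\<eta> > 0"
    and cont: "continuous_on (triT x0 \<eta>) h"
    and hol: "\<And>y. y \<in> triT x0 \<eta> \<Longrightarrow> 0 < Im y \<Longrightarrow> h field_differentiable (at y)"
    and bB: "\<And>y. y \<in> triT x0 \<eta> \<Longrightarrow> cmod (h y) \<le> B"
    and bE: "\<And>y. y \<in> triT x0 \<eta> \<Longrightarrow> Im y = 0 \<Longrightarrow> cmod (h y) \<le> \<epsilon>"
    and z: "0 < Im z" "cmod (z - of_real x0) < \<eta> / 4"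
  shows "cmod (h z) \<le> \<epsilon> + 32 / \<eta> * B * Im z"
proof -
  define a where "a = Complex (x0 - \<eta>) 0"
  define b where "b = Complex (x0 + \<eta>) 0"
  define cc where "cc = Complex x0 \<eta>"
  define T where "T = triT x0 \<eta>"
  define \<gamma> where "\<gamma> = linepath a b +++ linepath b cc +++ linepath cc a"
  have hull: "convex hull {a, b, cc} = T" unfolding a_def b_def cc_def T_def using triT_hull[OF \<eta>] .
  have aT: "a \<in> T" unfolding hull[symmetric] by (rule hull_inc) simp
  have e0: "0 \<le> \<epsilon>" using bE[of a] aT unfolding a_def T_def by (auto intro: order_trans[OF norm_ge_zero])
  have B0: "0 \<le> B" using bB[of a] aT unfolding T_def by (auto intro: order_trans[OF norm_ge_zero])
  have segs: "closed_segment a b \<subseteq> T" "closed_segment b cc \<subseteq> T" "closed_segment cc a \<subseteq> T"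
    unfolding hull[symmetric] segment_convex_hull by (auto intro!: hull_mono)
  have pim: "path_image \<gamma> = closed_segment a b \<union> closed_segment b cc \<union> closed_segment cc a"
    unfolding \<gamma>_def by (simp add: path_image_join Un_assoc)
  have vp: "valid_path \<gamma>" unfolding \<gamma>_def by simp
  have loop: "pathfinish \<gamma> = pathstart \<gamma>" unfolding \<gamma>_def by simp
  have zT: "z \<in> interior T" unfolding T_def by (rule triT_interior[OF \<eta> z])
  have far: "\<eta> / 4 \<le> cmod (\<zeta> - z)" if "\<zeta> \<in> closed_segment b cc \<union> closed_segment cc a" for \<zeta>
    using that seg_bc[of \<zeta> x0 \<eta>] seg_ca[of \<zeta> x0 \<eta>] seg_far_aux[OF \<eta> _ z(2)]
    unfolding b_def cc_def a_def by blast
  have ab_Im: "Im \<zeta> = 0" if "\<zeta> \<in> closed_segment a b" for \<zeta>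
    using that seg_ab_Im unfolding a_def b_def by blast
  have znot: "z \<notin> path_image \<gamma>"
  proof
    assume "z \<in> path_image \<gamma>"
    then consider "z \<in> closed_segment a b" | "z \<in> closed_segment b cc \<union> closed_segment cc a" unfolding pim by blast
    then show False
    proof cases
      case 1 then show False using ab_Im z by force
    next
      case 2 then show False using far[OF 2] \<eta> by simp
    qed
  qed
  have imT: "path_image \<gamma> \<subseteq> T" using segs pim by auto
  have Tpos: "0 \<le> Im y" if "y \<in> T" for y using that unfolding T_def triT_def by auto
  have hol': "h field_differentiable at y" if "y \<in> interior T - {}" for y
    using hol[of y] that interior_subset[of T] triT_interior_Im[of y x0 \<eta>] unfolding T_def by auto
  define s where "s = Re z - x0"
  define t where "t = Im z"
  have st: "\<bar>s\<bar> + t < \<eta> / 2" "0 < t"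
  proof -
    have "\<bar>Re (z - of_real x0)\<bar> \<le> cmod (z - of_real x0)" "\<bar>Im (z - of_real x0)\<bar> \<le> cmod (z - of_real x0)"
      by (rule abs_Re_le_cmod, rule abs_Im_le_cmod)
    then show "\<bar>s\<bar> + t < \<eta> / 2" using z unfolding s_def t_def by auto
    show "0 < t" using z unfolding t_def by simp
  qed
  have W: "winding_number \<gamma> z = 1"
    unfolding \<gamma>_def
  proof (rule wn_triangle3)
    show "z \<in> interior (convex hull {a, b, cc})" using zT hull by simp
    have "Im ((b - a) * cnj (b - z)) = 2 * \<eta> * t" unfolding a_def b_def t_def by (simp add: algebra_simps)
    then show "0 < Im ((b - a) * cnj (b - z))" using st \<eta> by simp
    have "Im ((cc - b) * cnj (cc - z)) = \<eta> * (\<eta> - t - s)" unfolding cc_def b_def t_def s_def by (simp add: algebra_simps)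
    moreover have "0 < \<eta> - t - s" using st by linarith
    ultimately show "0 < Im ((cc - b) * cnj (cc - z))" using \<eta> by simp
    have "Im ((a - cc) * cnj (a - z)) = \<eta> * (\<eta> - t + s)" unfolding cc_def a_def t_def s_def by (simp add: algebra_simps)
    moreover have "0 < \<eta> - t + s" using st by linarith
    ultimately show "0 < Im ((a - cc) * cnj (a - z))" using \<eta> by simp
  qed
  have contT: "continuous_on T h" using cont unfolding T_def .
  have f1: "((\<lambda>w. h w / (w - z)) has_contour_integral (2 * pi * \<i> * winding_number \<gamma> z * h z)) \<gamma>"
    by (rule Cauchy_integral_formula_convex[OF triT_convex[of x0 \<eta>, folded T_def] finite.emptyI contT hol' zT vp _ loop])
      (use imT znot in auto)
  have cz: "y - cnj z \<noteq> 0" if "y \<in> T" for y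
  proof
    assume "y - cnj z = 0"
    then have "Im y = - Im z" by (metis complex_cnj_cancel_iff complex_cnj_diff complex_cnj_zero_iff eq_iff_diff_eq_0 cnj.simps(2))
    then show False using Tpos[OF that] z by simp
  qed
  have f2: "((\<lambda>w. h w / (w - cnj z)) has_contour_integral 0) \<gamma>"
  proof (rule Cauchy_theorem_convex[OF _ triT_convex[of x0 \<eta>, folded T_def] finite.emptyI _ vp imT loop])
    show "continuous_on T (\<lambda>w. h w / (w - cnj z))"
      using cz by (intro continuous_on_divide contT continuous_intros) auto
    fix y assume y: "y \<in> interior T - {}"
    then have yT: "y \<in> T" using interior_subset by auto
    show "(\<lambda>w. h w / (w - cnj z)) field_differentiable at y"
      using hol'[OF y] cz[OF yT] by (intro field_differentiable_divide field_differentiable_diff) (auto intro: field_differentiable_ident field_differentiable_const)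
  qed
  define k where "k w = h w / (w - z) - h w / (w - cnj z)" for w
  have fk: "(k has_contour_integral (2 * pi * \<i> * h z)) \<gamma>"
    using has_contour_integral_diff[OF f1 f2] W unfolding k_def by simp
  have kcont: "continuous_on (T - {z}) k"
    unfolding k_def using contT cz
    by (intro continuous_intros continuous_on_subset[OF contT]) auto
  have zseg: "z \<notin> closed_segment a b" "z \<notin> closed_segment b cc" "z \<notin> closed_segment cc a"
    using znot pim by auto
  have int1: "(k has_contour_integral contour_integral (linepath a b) k) (linepath a b)"
    by (intro has_contour_integral_integral contour_integrable_continuous_linepath
        continuous_on_subset[OF kcont]) (use segs zseg in auto)
  have int2: "(k has_contour_integral contour_integral (linepath b cc) k) (linepath b cc)"
    by (intro has_contour_integral_integral contour_integrable_continuous_linepath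
        continuous_on_subset[OF kcont]) (use segs zseg in auto)
  have int3: "(k has_contour_integral contour_integral (linepath cc a) k) (linepath cc a)"
    by (intro has_contour_integral_integral contour_integrable_continuous_linepath
        continuous_on_subset[OF kcont]) (use segs zseg in auto)
  define i1 where "i1 = contour_integral (linepath a b) k"
  define i2 where "i2 = contour_integral (linepath b cc) k"
  define i3 where "i3 = contour_integral (linepath cc a) k"
  have "(k has_contour_integral (i1 + (i2 + i3))) \<gamma>"
    unfolding \<gamma>_def i1_def i2_def i3_def
    by (intro has_contour_integral_join int1 int2 int3 valid_path_join) auto
  then have sum: "2 * pi * \<i> * h z = i1 + (i2 + i3)"
    using has_contour_integral_unique[OF fk] by simp
  have knorm: "cmod (k w) = cmod (h w) * (2 * Im z) / (cmod (w - z) * cmod (w - cnj z))"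
    if "w \<in> T" "w \<noteq> z" for w
  proof -
    have "w \<noteq> cnj z" using cz[OF that(1)] by simp
    then have "k w = h w * (z - cnj z) / ((w - z) * (w - cnj z))" unfolding k_def using k_formula that(2) by blast
    moreover have "cmod (z - cnj z) = 2 * Im z" unfolding complex_diff_cnj using z by (simp add: norm_mult)
    ultimately show ?thesis by (simp add: norm_mult norm_divide)
  qed
  define Bk where "Bk = B * (2 * Im z) / ((\<eta> / 4) * (\<eta> / 4))"
  have side: "cmod (k \<zeta>) \<le> Bk" if "\<zeta> \<in> closed_segment b cc \<union> closed_segment cc a" for \<zeta>
  proof -
    have \<zeta>T: "\<zeta> \<in> T" using that segs by auto
    have f: "\<eta> / 4 \<le> cmod (\<zeta> - z)" by (rule far[OF that])
    then have nz: "\<zeta> \<noteq> z" using \<eta> by auto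
    have g: "cmod (\<zeta> - z) \<le> cmod (\<zeta> - cnj z)" by (rule cmod_cnj_ge[OF Tpos[OF \<zeta>T]]) (use z in simp)
    have p1: "(\<eta> / 4) * (\<eta> / 4) \<le> cmod (\<zeta> - z) * cmod (\<zeta> - cnj z)"
      using f g \<eta> by (meson mult_mono order_trans less_imp_le zero_less_divide_iff zero_less_numeral norm_ge_zero)
    have p2: "0 < (\<eta> / 4) * (\<eta> / 4)" using \<eta> by simp
    have "cmod (k \<zeta>) = cmod (h \<zeta>) * (2 * Im z) / (cmod (\<zeta> - z) * cmod (\<zeta> - cnj z))"
      by (rule knorm[OF \<zeta>T nz])
    also have "\<dots> \<le> B * (2 * Im z) / (cmod (\<zeta> - z) * cmod (\<zeta> - cnj z))"
      using bB[of \<zeta>] \<zeta>T z unfolding T_def by (intro divide_right_mono mult_right_mono) auto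
    also have "\<dots> \<le> Bk" unfolding Bk_def
    proof (rule divide_left_mono[OF p1])
      show "0 \<le> B * (2 * Im z)" using B0 z by simp
      have "0 < cmod (\<zeta> - z) * cmod (\<zeta> - cnj z)" using p1 p2 by linarith
      then show "0 < cmod (\<zeta> - z) * cmod (\<zeta> - cnj z) * (\<eta> / 4 * (\<eta> / 4))"
        using p2 by (rule mult_pos_pos)
    qed
    finally show ?thesis .
  qed
  have Bk0: "0 \<le> Bk" unfolding Bk_def using B0 z by simp
  have len: "cmod (cc - b) \<le> 2 * \<eta>" "cmod (a - cc) \<le> 2 * \<eta>"
    using cmod_le[of "cc - b"] cmod_le[of "a - cc"] \<eta> unfolding a_def b_def cc_def by auto
  have bi2: "cmod i2 \<le> Bk * (2 * \<eta>)"
  proof -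
    have "cmod i2 \<le> Bk * cmod (cc - b)"
      using has_contour_integral_bound_linepath[OF int2[folded i2_def] Bk0] side by auto
    also have "\<dots> \<le> Bk * (2 * \<eta>)" using len Bk0 by (simp add: mult_left_mono)
    finally show ?thesis .
  qed
  have bi3: "cmod i3 \<le> Bk * (2 * \<eta>)"
  proof -
    have "cmod i3 \<le> Bk * cmod (a - cc)"
      using has_contour_integral_bound_linepath[OF int3[folded i3_def] Bk0] side by auto
    also have "\<dots> \<le> Bk * (2 * \<eta>)" using len Bk0 by (simp add: mult_left_mono)
    finally show ?thesis .
  qed
  have bi1: "cmod i1 \<le> 2 * pi * \<epsilon>"
  proof -
    have hi: "((\<lambda>t. k (linepath a b t) * (b - a)) has_integral i1) {0..1}"
      using int1[folded i1_def] unfolding has_contour_integral_linepath .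
    define g where "g t = \<epsilon> * (4 * \<eta> * Im z / ((x0 - \<eta> + 2 * \<eta> * t - Re z)\<^sup>2 + (Im z)\<^sup>2))" for t
    have hg: "(g has_integral (\<epsilon> * (2 * arctan ((x0 + \<eta> - Re z) / Im z) - 2 * arctan ((x0 - \<eta> - Re z) / Im z)))) {0..1}"
      unfolding g_def by (intro has_integral_mult_right arctan_integral_bound) (use z \<eta> in auto)
    have le: "norm (k (linepath a b t) * (b - a)) \<le> g t" if t: "t \<in> {0..1}" for t
    proof -
      define w where "w = linepath a b t"
      have wseg: "w \<in> closed_segment a b" unfolding w_def using t by (auto simp: linepath_in_path)
      have wT: "w \<in> T" using wseg segs by auto
      have wI: "Im w = 0" using ab_Im[OF wseg] .
      have wR: "Re w = x0 - \<eta> + 2 * \<eta> * t" unfolding w_def linepath_def a_def b_def by (simp add: algebra_simps)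
      have nz: "w \<noteq> z" using wI z by auto
      have wc: "w - cnj z = cnj (w - z)" using wI by (simp add: complex_eq_iff)
      have sq: "cmod (w - z) * cmod (w - cnj z) = (x0 - \<eta> + 2 * \<eta> * t - Re z)\<^sup>2 + (Im z)\<^sup>2"
        unfolding wc complex_mod_cnj using cmod_power2[of "w - z"] wI wR by (simp add: power2_eq_square)
      have pos: "0 < (x0 - \<eta> + 2 * \<eta> * t - Re z)\<^sup>2 + (Im z)\<^sup>2" using z by (simp add: add_nonneg_pos)
      have "b - a = complex_of_real (2 * \<eta>)" unfolding a_def b_def by (simp add: complex_eq_iff)
      then have ba: "cmod (b - a) = 2 * \<eta>" using \<eta> by simp
      have "norm (k w * (b - a)) = cmod (h w) * (2 * Im z) / ((x0 - \<eta> + 2 * \<eta> * t - Re z)\<^sup>2 + (Im z)\<^sup>2) * (2 * \<eta>)"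
        using knorm[OF wT nz] sq ba by (simp add: norm_mult)
      also have "\<dots> \<le> \<epsilon> * (2 * Im z) / ((x0 - \<eta> + 2 * \<eta> * t - Re z)\<^sup>2 + (Im z)\<^sup>2) * (2 * \<eta>)"
        using bE[of w] wT wI z \<eta> pos unfolding T_def
        by (intro mult_right_mono divide_right_mono) auto
      also have "\<dots> = g t" unfolding g_def by (simp add: field_simps)
      finally show ?thesis unfolding w_def .
    qed
    have "norm i1 \<le> integral {0..1} g"
      using integral_norm_bound_integral[OF has_integral_integrable[OF hi] has_integral_integrable[OF hg] le]
        integral_unique[OF hi] by simp
    also have "\<dots> = \<epsilon> * (2 * arctan ((x0 + \<eta> - Re z) / Im z) - 2 * arctan ((x0 - \<eta> - Re z) / Im z))"
      using integral_unique[OF hg] .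
    also have "\<dots> \<le> \<epsilon> * (2 * pi)"
      using arctan_bounded[of "(x0 + \<eta> - Re z) / Im z"] arctan_bounded[of "(x0 - \<eta> - Re z) / Im z"] e0
      by (intro mult_left_mono) auto
    finally show ?thesis by (simp add: mult.commute)
  qed
  have "2 * pi * cmod (h z) = cmod (i1 + (i2 + i3))"
    using arg_cong[OF sum, of cmod] by (simp add: norm_mult)
  also have "\<dots> \<le> cmod i1 + cmod i2 + cmod i3"
    by (metis add.assoc norm_triangle_ineq order.trans add_left_mono)
  also have "\<dots> \<le> 2 * pi * \<epsilon> + Bk * (2 * \<eta>) + Bk * (2 * \<eta>)" using bi1 bi2 bi3 by linarith
  finally have main: "2 * pi * cmod (h z) \<le> 2 * pi * \<epsilon> + 4 * \<eta> * Bk" by (simp add: algebra_simps)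
  have "4 * \<eta> * Bk = 128 / \<eta> * B * Im z" unfolding Bk_def using \<eta> by (simp add: field_simps)
  also have "\<dots> \<le> 2 * pi * (32 / \<eta> * B * Im z)"
  proof -
    have "0 \<le> B * Im z / \<eta>" using B0 z \<eta> by simp
    moreover have "128 \<le> 2 * pi * 32" using pi_gt3 by linarith
    ultimately have "128 * (B * Im z / \<eta>) \<le> (2 * pi * 32) * (B * Im z / \<eta>)" by (rule mult_right_mono[rotated])
    then show ?thesis by (simp add: field_simps)
  qed
  finally have "2 * pi * cmod (h z) \<le> 2 * pi * (\<epsilon> + 32 / \<eta> * B * Im z)"
    using main by (simp add: distrib_left)
  then show ?thesis using pi_gt_zero by (simp add: mult_le_cancel_left_pos)
qed



lemma open_uhd: "open (upper_half_disc z0 r)"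
  unfolding upper_half_disc_def by (intro open_Int open_ball open_halfspace_Im_gt)

lemma triT_sub_uhd:
  assumes "x0 \<in> {q-\<rho><..<q+\<rho>}"
  shows "triT x0 ((\<rho> - \<bar>x0 - q\<bar>) / 2) \<subseteq> upper_half_disc (of_real q) \<rho> \<union> of_real ` {q-\<rho><..<q+\<rho>}"
proof
  fix y assume y: "y \<in> triT x0 ((\<rho> - \<bar>x0 - q\<bar>) / 2)"
  have "cmod (y - of_real x0) \<le> (\<rho> - \<bar>x0 - q\<bar>) / 2" by (rule triT_cball[OF y])
  moreover have "cmod (y - of_real q) \<le> cmod (y - of_real x0) + cmod (of_real x0 - (of_real q :: complex))"
    by (metis diff_add_cancel norm_triangle_ineq add_diff_eq)
  moreover have "cmod (of_real x0 - (of_real q :: complex)) = \<bar>x0 - q\<bar>"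
    by (metis norm_of_real of_real_diff)
  moreover have "\<bar>x0 - q\<bar> < \<rho>" using assms by auto
  moreover have "(\<rho> - \<bar>x0 - q\<bar>) / 2 + \<bar>x0 - q\<bar> < \<rho>" using assms by (auto simp: field_simps)
  ultimately have yq: "cmod (y - of_real q) < \<rho>" by linarith
  have Im0: "0 \<le> Im y" using y unfolding triT_def by auto
  show "y \<in> upper_half_disc (of_real q) \<rho> \<union> of_real ` {q-\<rho><..<q+\<rho>}"
  proof (cases "Im y = 0")
    case True
    then have ye: "y = of_real (Re y)" by (simp add: complex_eq_iff)
    have "\<bar>Re y - q\<bar> < \<rho>" using yq ye by (metis norm_of_real of_real_diff)
    then have "Re y \<in> {q-\<rho><..<q+\<rho>}" by auto
    then show ?thesis using ye by blast
  next
    case False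
    then show ?thesis using Im0 yq unfolding upper_half_disc_def by (auto simp: dist_norm norm_minus_commute)
  qed
qed

lemma closed_core_upper:
  fixes g :: "nat \<Rightarrow> complex \<Rightarrow> complex" and un :: "nat \<Rightarrow> real \<Rightarrow> complex" and u :: "real \<Rightarrow> complex"
  assumes \<rho>: "\<rho> > 0"
    and hol: "\<And>n. g n holomorphic_on upper_half_disc (of_real q) \<rho>"
    and cont: "\<And>n. continuous_on (upper_half_disc (of_real q) \<rho> \<union> of_real ` {q-\<rho><..<q+\<rho>}) (g n)"
    and bnd: "\<And>n z. z \<in> upper_half_disc (of_real q) \<rho> \<Longrightarrow> cmod (g n z) \<le> M"
    and eq: "\<And>n x. x \<in> {q-\<rho><..<q+\<rho>} \<Longrightarrow> g n (of_real x) = un n x"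
    and conv: "\<And>e. e > 0 \<Longrightarrow> \<exists>N. \<forall>n\<ge>N. \<forall>x\<in>{q-\<rho><..<q+\<rho>}. cmod (un n x - u x) < e"
  shows "\<exists>G. G holomorphic_on upper_half_disc (of_real q) \<rho> \<and>
    continuous_on (upper_half_disc (of_real q) \<rho> \<union> of_real ` {q-\<rho><..<q+\<rho>}) G \<and>
    (\<forall>z\<in>upper_half_disc (of_real q) \<rho>. cmod (G z) \<le> M) \<and> (\<forall>x\<in>{q-\<rho><..<q+\<rho>}. G (of_real x) = u x)"
proof -
  define \<Omega> where "\<Omega> = upper_half_disc (of_real q) \<rho>"
  define Dm where "Dm = (of_real ` {q-\<rho><..<q+\<rho>} :: complex set)"
  have o\<Omega>: "open \<Omega>" unfolding \<Omega>_def by (rule open_uhd)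
  have wq: "of_real q + \<i> * of_real (\<rho> / 2) \<in> \<Omega>"
    unfolding \<Omega>_def upper_half_disc_def using \<rho> by (simp add: dist_norm norm_mult)
  have M0: "0 \<le> M" using bnd[OF wq[unfolded \<Omega>_def], of 0] by (meson norm_ge_zero order_trans)
  obtain G0 r where G0hol: "G0 holomorphic_on \<Omega>" and r: "strict_mono (r :: nat \<Rightarrow> nat)"
    and G0lim: "\<And>x. x \<in> \<Omega> \<Longrightarrow> (\<lambda>n. g (r n) x) \<longlonglongrightarrow> G0 x"
  proof (rule Montel[OF o\<Omega>, of "{f. f holomorphic_on \<Omega> \<and> (\<forall>z\<in>\<Omega>. cmod (f z) \<le> M)}" g])
    show "\<And>h. h \<in> {f. f holomorphic_on \<Omega> \<and> (\<forall>z\<in>\<Omega>. cmod (f z) \<le> M)} \<Longrightarrow> h holomorphic_on \<Omega>" by auto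
    show "\<And>K. compact K \<Longrightarrow> K \<subseteq> \<Omega> \<Longrightarrow> \<exists>B. \<forall>h\<in>{f. f holomorphic_on \<Omega> \<and> (\<forall>z\<in>\<Omega>. cmod (f z) \<le> M)}. \<forall>z\<in>K. cmod (h z) \<le> B"
      by (rule exI[of _ M]) auto
    show "range g \<subseteq> {f. f holomorphic_on \<Omega> \<and> (\<forall>z\<in>\<Omega>. cmod (f z) \<le> M)}"
      using hol bnd unfolding \<Omega>_def by auto
  qed blast
  have G0bnd: "cmod (G0 z) \<le> M" if "z \<in> \<Omega>" for z
    by (rule Lim_norm_ubound[OF _ G0lim[OF that]]) (use bnd that in \<open>auto simp: \<Omega>_def\<close>)
  have rle: "n \<le> r n" for n using seq_suble[OF r] .
  have key: "cmod (g (r n) z - G0 z) \<le> 2 * e + 32 / ((\<rho> - \<bar>x0 - q\<bar>) / 2) * (2 * M + 2 * e) * Im z"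
    if x0: "x0 \<in> {q-\<rho><..<q+\<rho>}" and e: "e > 0"
      and N: "\<forall>n\<ge>N. \<forall>x\<in>{q-\<rho><..<q+\<rho>}. cmod (un n x - u x) < e" and nN: "N \<le> n"
      and z: "0 < Im z" "cmod (z - of_real x0) < ((\<rho> - \<bar>x0 - q\<bar>) / 2) / 4" for x0 e N n z
  proof -
    define \<eta> where "\<eta> = (\<rho> - \<bar>x0 - q\<bar>) / 2"
    have \<eta>: "\<eta> > 0" using x0 unfolding \<eta>_def by auto
    have Tsub: "triT x0 \<eta> \<subseteq> \<Omega> \<union> Dm" unfolding \<eta>_def \<Omega>_def Dm_def by (rule triT_sub_uhd[OF x0])
    have zO: "z \<in> \<Omega>"
    proof -
      have "z \<in> interior (triT x0 \<eta>)" by (rule triT_interior[OF \<eta> z(1)]) (use z(2) \<eta>_def in simp)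
      then have "z \<in> triT x0 \<eta>" using interior_subset by blast
      then show ?thesis using Tsub z(1) unfolding Dm_def by auto
    qed
    have est: "cmod (g (r n) z - g (r m) z) \<le> 2 * e + 32 / \<eta> * (2 * M + 2 * e) * Im z" if mN: "N \<le> m" for m
    proof (rule poisson_bound[OF \<eta>, where h="\<lambda>y. g (r n) y - g (r m) y"])
      show "continuous_on (triT x0 \<eta>) (\<lambda>y. g (r n) y - g (r m) y)"
        by (intro continuous_on_diff continuous_on_subset[OF cont Tsub[unfolded \<Omega>_def Dm_def]])
      fix y assume yT: "y \<in> triT x0 \<eta>"
      have yOD: "y \<in> \<Omega> \<union> Dm" using yT Tsub by auto
      show "0 < Im y \<Longrightarrow> (\<lambda>y. g (r n) y - g (r m) y) field_differentiable at y"
      proof -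
        assume "0 < Im y"
        then have "y \<in> \<Omega>" using yOD unfolding Dm_def by auto
        then show ?thesis using hol o\<Omega> unfolding \<Omega>_def
          by (intro field_differentiable_diff holomorphic_on_imp_differentiable_at) (auto simp: \<Omega>_def)
      qed
      have realcase: "cmod (g (r n) y - g (r m) y) \<le> 2 * e" if yD: "y \<in> Dm" for y
      proof -
        from yD obtain x where x: "x \<in> {q-\<rho><..<q+\<rho>}" "y = of_real x" unfolding Dm_def by blast
        have geq: "g (r n) y - g (r m) y = (un (r n) x - u x) - (un (r m) x - u x)" using eq x by simp
        moreover have "cmod (un (r n) x - u x) < e" using N x(1) order_trans[OF nN rle[of n]] by blast
        moreover have "cmod (un (r m) x - u x) < e" using N x(1) order_trans[OF mN rle[of m]] by blast
        moreover have "cmod ((un (r n) x - u x) - (un (r m) x - u x)) \<le> cmod (un (r n) x - u x) + cmod (un (r m) x - u x)"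
          by (rule norm_triangle_ineq4)
        ultimately show ?thesis unfolding geq by linarith
      qed
      show "cmod (g (r n) y - g (r m) y) \<le> 2 * M + 2 * e"
      proof (cases "y \<in> \<Omega>")
        case True
        have "cmod (g (r n) y - g (r m) y) \<le> cmod (g (r n) y) + cmod (g (r m) y)" by (rule norm_triangle_ineq4)
        also have "\<dots> \<le> 2 * M" using bnd True unfolding \<Omega>_def by (metis add_mono mult_2)
        finally show ?thesis using e by linarith
      next
        case False
        then have "y \<in> Dm" using yOD by blast
        then show ?thesis using realcase M0 by (meson add_increasing mult_nonneg_nonneg zero_le_numeral)
      qed
      show "Im y = 0 \<Longrightarrow> cmod (g (r n) y - g (r m) y) \<le> 2 * e"
        using realcase yOD unfolding \<Omega>_def upper_half_disc_def by auto
    qed (use z \<eta>_def in auto)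
    have lim: "(\<lambda>m. cmod (g (r n) z - g (r m) z)) \<longlonglongrightarrow> cmod (g (r n) z - G0 z)"
      by (intro tendsto_norm tendsto_diff tendsto_const G0lim zO)
    have "cmod (g (r n) z - G0 z) \<le> 2 * e + 32 / \<eta> * (2 * M + 2 * e) * Im z"
      by (rule tendsto_upperbound[OF lim]) (use est in \<open>auto simp: eventually_sequentially\<close>)
    then show ?thesis unfolding \<eta>_def .
  qed
  define G where "G z = (if 0 < Im z then G0 z else u (Re z))" for z
  have GG0: "G z = G0 z" if "z \<in> \<Omega>" for z using that unfolding G_def \<Omega>_def upper_half_disc_def by auto
  have Ghol: "G holomorphic_on \<Omega>" using G0hol by (rule holomorphic_transform) (use GG0 in auto)
  have Greal: "G (of_real x) = u x" for x unfolding G_def by simp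
  have Gcont: "continuous_on (\<Omega> \<union> Dm) G"
    unfolding continuous_on_iff
  proof (intro ballI allI impI)
    fix p and e :: real assume p: "p \<in> \<Omega> \<union> Dm" and e: "0 < e"
    show "\<exists>d>0. \<forall>x'\<in>\<Omega> \<union> Dm. dist x' p < d \<longrightarrow> dist (G x') (G p) < e"
    proof (cases "p \<in> \<Omega>")
      case True
      have "continuous_on \<Omega> G0" using G0hol by (rule holomorphic_on_imp_continuous_on)
      then obtain d1 where d1: "d1 > 0" "\<And>x'. x' \<in> \<Omega> \<Longrightarrow> dist x' p < d1 \<Longrightarrow> dist (G0 x') (G0 p) < e"
        using True e unfolding continuous_on_iff by blast
      obtain d2 where d2: "d2 > 0" "ball p d2 \<subseteq> \<Omega>" using o\<Omega> True open_contains_ball by blast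
      show ?thesis
      proof (intro exI[of _ "min d1 d2"] conjI ballI impI)
        show "0 < min d1 d2" using d1 d2 by simp
        fix x' assume "x' \<in> \<Omega> \<union> Dm" "dist x' p < min d1 d2"
        then have "x' \<in> \<Omega>" "dist x' p < d1" using d2 by (auto simp: dist_commute)
        then show "dist (G x') (G p) < e" using d1 GG0 True by simp
      qed
    next
      case False
      then obtain x0 where x0: "x0 \<in> {q-\<rho><..<q+\<rho>}" and px: "p = of_real x0" using p unfolding Dm_def by auto
      define \<eta> where "\<eta> = (\<rho> - \<bar>x0 - q\<bar>) / 2"
      have \<eta>: "\<eta> > 0" using x0 unfolding \<eta>_def by auto
      define e1 where "e1 = e / 6"
      have e1: "e1 > 0" using e unfolding e1_def by simp
      obtain N where N: "\<forall>n\<ge>N. \<forall>x\<in>{q-\<rho><..<q+\<rho>}. cmod (un n x - u x) < e1" using conv[OF e1] by blast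
      define gn where "gn = g (r N)"
      obtain d1 where d1: "d1 > 0" "\<And>x'. x' \<in> \<Omega> \<union> Dm \<Longrightarrow> dist x' p < d1 \<Longrightarrow> dist (gn x') (gn p) < e1"
        using cont[of "r N"] p e1 unfolding continuous_on_iff gn_def \<Omega>_def Dm_def by blast
      define K where "K = 32 / \<eta> * (2 * M + 2 * e1)"
      have K0: "0 \<le> K" unfolding K_def using \<eta> M0 e1 by simp
      define d where "d = min d1 (min (\<eta> / 4) (e1 / (K + 1)))"
      have d: "d > 0" unfolding d_def using d1 \<eta> e1 K0 by simp
      have gnp: "cmod (gn p - u x0) < e1"
        using eq[OF x0, of "r N"] N x0 rle[of N] unfolding gn_def px by auto
      show ?thesis
      proof (intro exI[of _ d] conjI ballI impI d)
        fix x' assume x': "x' \<in> \<Omega> \<union> Dm" and dx: "dist x' p < d"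
        have c1: "dist (gn x') (gn p) < e1" using d1(2)[OF x'] dx unfolding d_def by simp
        show "dist (G x') (G p) < e"
        proof (cases "x' \<in> \<Omega>")
          case True
          have Imx: "0 < Im x'" using True unfolding \<Omega>_def upper_half_disc_def by simp
          have dxp: "cmod (x' - of_real x0) < \<eta> / 4" using dx unfolding d_def px dist_norm by simp
          have k: "cmod (gn x' - G0 x') \<le> 2 * e1 + K * Im x'"
            using key[OF x0 e1 N order_refl Imx] dxp unfolding gn_def K_def \<eta>_def by simp
          have "Im x' \<le> cmod (x' - p)"
            using abs_Im_le_cmod[of "x' - p"] px by simp
          then have "Im x' < e1 / (K + 1)" using dx unfolding d_def dist_norm by simp
          then have "K * Im x' \<le> K * (e1 / (K + 1))" using K0 by (intro mult_left_mono) auto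
          also have "\<dots> < e1" using K0 e1 by (simp add: field_simps)
          finally have kk: "K * Im x' < e1" .
          have "dist (G x') (G p) = cmod ((G0 x' - gn x') + (gn x' - gn p) + (gn p - u x0))"
            using GG0[OF True] Greal[of x0] px by (simp add: dist_norm)
          also have "\<dots> \<le> cmod (G0 x' - gn x') + cmod (gn x' - gn p) + cmod (gn p - u x0)"
            by (meson add_mono norm_triangle_ineq order_trans order_refl)
          also have "\<dots> < e"
          proof -
            have c1': "cmod (gn x' - gn p) < e1" using c1 by (simp add: dist_norm)
            have k': "cmod (G0 x' - gn x') \<le> 2 * e1 + K * Im x'" using k by (simp add: norm_minus_commute)
            have "e1 * 6 = e" unfolding e1_def by simp
            then show ?thesis using c1' k' kk gnp e1 by linarith
          qed
          finally show ?thesis .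
        next
          case False
          then obtain x1 where x1: "x1 \<in> {q-\<rho><..<q+\<rho>}" "x' = of_real x1" using x' unfolding Dm_def by auto
          have a1: "cmod (u x1 - un (r N) x1) < e1" using N x1 rle[of N] by (simp add: norm_minus_commute)
          have a2: "cmod (un (r N) x1 - un (r N) x0) < e1" using c1 eq x1 x0 unfolding gn_def px dist_norm by simp
          have a3: "cmod (un (r N) x0 - u x0) < e1" using N x0 rle[of N] by simp
          have "dist (G x') (G p) = cmod ((u x1 - un (r N) x1) + (un (r N) x1 - un (r N) x0) + (un (r N) x0 - u x0))"
            using Greal x1 px by (simp add: dist_norm)
          also have "\<dots> \<le> cmod (u x1 - un (r N) x1) + cmod (un (r N) x1 - un (r N) x0) + cmod (un (r N) x0 - u x0)"
            by (meson add_mono norm_triangle_ineq order_trans order_refl)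
          also have "\<dots> < e" using a1 a2 a3 e1 unfolding e1_def by linarith
          finally show ?thesis .
        qed
      qed
    qed
  qed
  show ?thesis
    using Ghol Gcont G0bnd GG0 Greal unfolding \<Omega>_def Dm_def by (intro exI[of _ G]) auto
qed



lemma real_islimpt:
  assumes "r > 0"
  shows "complex_of_real q islimpt (of_real ` {q - r<..<q + r})"
  unfolding islimpt_approachable
proof (intro allI impI)
  fix e :: real assume e: "e > 0"
  define t where "t = min e r / 2"
  have t: "0 < t" "t < e" "t < r" unfolding t_def using e assms by auto
  show "\<exists>x'\<in>complex_of_real ` {q - r<..<q + r}. x' \<noteq> complex_of_real q \<and> dist x' (complex_of_real q) < e"
  proof (rule bexI[of _ "of_real (q + t)"])
    show "of_real (q + t) \<in> complex_of_real ` {q - r<..<q + r}" by (rule image_eqI[of _ _ "q + t"]) (use t in auto)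
  qed (use t in \<open>auto simp: dist_norm\<close>)
qed

lemma pole_contra:
  fixes G :: "complex \<Rightarrow> complex"
  assumes "\<rho> > 0" and w: "w = of_real q + \<i> * of_real s" and s: "\<bar>s\<bar> = \<rho> / 2"
    and S: "\<And>z. cmod (z - of_real q) < \<rho> \<Longrightarrow> Im z * s > 0 \<Longrightarrow> z \<noteq> w \<Longrightarrow> G z = 1 / (z - w)"
    and bnd: "\<And>z. cmod (z - of_real q) < \<rho> \<Longrightarrow> Im z * s > 0 \<Longrightarrow> cmod (G z) \<le> B"
  shows False
proof -
  define t where "t = min (\<rho> / 4) (1 / (\<bar>B\<bar> + 1))"
  have t: "0 < t" "t \<le> \<rho> / 4" "t \<le> 1 / (\<bar>B\<bar> + 1)" unfolding t_def using assms by auto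
  define z where "z = w + \<i> * of_real (sgn s * t)"
  have s0: "s \<noteq> 0" using s assms by auto
  have zq: "z - of_real q = \<i> * of_real (s + sgn s * t)" unfolding z_def w by (simp add: algebra_simps)
  have "\<bar>s + sgn s * t\<bar> = \<bar>s\<bar> + t" using s0 t by (cases "s > 0") (auto simp: sgn_if)
  moreover have "cmod (z - of_real q) = \<bar>s + sgn s * t\<bar>" unfolding zq
    by (simp only: norm_mult norm_ii norm_of_real) simp
  ultimately have zd: "cmod (z - of_real q) = \<rho> / 2 + t" using s by simp
  have zd': "cmod (z - of_real q) < \<rho>" using zd t assms by linarith
  have Imz: "Im z * s > 0"
  proof -
    have "Im z = s + sgn s * t" unfolding z_def w by simp
    then show ?thesis using s0 t by (cases "s > 0") (auto simp: sgn_if mult_pos_pos mult_neg_neg)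
  qed
  have zw: "z - w = \<i> * of_real (sgn s * t)" unfolding z_def by simp
  have zw0: "z \<noteq> w" using zw s0 t by (auto simp: sgn_if split: if_splits)
  have "cmod (G z) = 1 / t" using S[OF zd' Imz zw0] zw s0 t by (simp add: norm_mult norm_divide abs_mult sgn_if)
  moreover have "\<bar>B\<bar> + 1 \<le> 1 / t" using t by (simp add: field_simps)
  ultimately show False using bnd[OF zd' Imz] by linarith
qed

lemma noext_upper:
  fixes G :: "complex \<Rightarrow> complex"
  assumes \<rho>: "\<rho> > 0"
    and hol: "G holomorphic_on upper_half_disc (of_real q) \<rho>"
    and cont: "continuous_on (upper_half_disc (of_real q) \<rho> \<union> of_real ` {q-\<rho><..<q+\<rho>}) G"
    and bnd: "\<And>z. z \<in> upper_half_disc (of_real q) \<rho> \<Longrightarrow> cmod (G z) \<le> B"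
    and eq: "\<And>x. x \<in> {q-\<rho><..<q+\<rho>} \<Longrightarrow> G (of_real x) = 1 / (of_real x - w)"
    and w: "w = of_real q + \<i> * of_real (\<rho> / 2)"
  shows False
proof -
  define \<Omega> where "\<Omega> = upper_half_disc (of_real q) \<rho>"
  define H where "H z = G z - 1 / (z - w)" for z
  define S where "S = ball (of_real q :: complex) (\<rho> / 4)"
  have wq: "cmod (w - of_real q) = \<rho> / 2" unfolding w using \<rho> by (simp add: norm_mult)
  have wS: "w \<notin> S" unfolding S_def using wq \<rho> by (auto simp: dist_norm norm_minus_commute)
  have cnjS: "cnj ` S \<subseteq> S"
  proof
    fix y assume "y \<in> cnj ` S"
    then obtain z where z: "z \<in> S" "y = cnj z" by auto
    have "cmod (cnj z - of_real q) = cmod (z - of_real q)"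
      by (metis complex_cnj_complex_of_real complex_cnj_diff complex_mod_cnj)
    then show "y \<in> S" using z unfolding S_def by (simp add: dist_norm norm_minus_commute)
  qed
  have SO: "S \<inter> {z. 0 < Im z} \<subseteq> \<Omega>"
    unfolding S_def \<Omega>_def upper_half_disc_def using \<rho> by auto
  have SOD: "S \<inter> {z. 0 \<le> Im z} \<subseteq> \<Omega> \<union> of_real ` {q-\<rho><..<q+\<rho>}"
  proof
    fix z assume z: "z \<in> S \<inter> {z. 0 \<le> Im z}"
    show "z \<in> \<Omega> \<union> of_real ` {q-\<rho><..<q+\<rho>}"
    proof (cases "Im z = 0")
      case True
      then have ze: "z = of_real (Re z)" by (simp add: complex_eq_iff)
      have "cmod (z - of_real q) < \<rho> / 4" using z unfolding S_def by (simp add: dist_norm norm_minus_commute)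
      then have "\<bar>Re z - q\<bar> < \<rho> / 4" using ze by (metis norm_of_real of_real_diff)
      then have "\<bar>Re z - q\<bar> < \<rho>" using \<rho> by linarith
      then have "Re z \<in> {q-\<rho><..<q+\<rho>}" by (auto simp: abs_less_iff)
      then show ?thesis using ze by blast
    next
      case False
      then show ?thesis using z SO by auto
    qed
  qed
  have holH: "H holomorphic_on (S \<inter> {z. 0 < Im z})"
    unfolding H_def using wS
    by (intro holomorphic_intros holomorphic_on_subset[OF hol SO[unfolded \<Omega>_def]]) auto
  have contH: "continuous_on (S \<inter> {z. 0 \<le> Im z}) H"
    unfolding H_def using wS
    by (intro continuous_intros continuous_on_subset[OF cont SOD[unfolded \<Omega>_def]]) auto
  have H0: "H z = 0" if "z \<in> S" "Im z = 0" for z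
  proof -
    have ze: "z = of_real (Re z)" using that by (simp add: complex_eq_iff)
    have "cmod (z - of_real q) < \<rho> / 4" using that unfolding S_def by (simp add: dist_norm norm_minus_commute)
    then have "\<bar>Re z - q\<bar> < \<rho> / 4" using ze by (metis norm_of_real of_real_diff)
    then have "\<bar>Re z - q\<bar> < \<rho>" using \<rho> by linarith
      then have "Re z \<in> {q-\<rho><..<q+\<rho>}" by (auto simp: abs_less_iff)
    then show ?thesis unfolding H_def using eq ze by (metis diff_self)
  qed
  have realH: "H z \<in> \<real>" if "z \<in> S" "z \<in> \<real>" for z
    using H0[OF that(1)] that(2) by (simp add: Reals_cases complex_is_Real_iff)
  define R where "R = (\<lambda>z. if 0 \<le> Im z then H z else cnj (H (cnj z)))"
  have holR: "R holomorphic_on S"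
    unfolding R_def by (rule Schwarz_reflection[OF _ cnjS holH contH realH]) (auto simp: S_def)
  have R0: "\<forall>z\<in>S. R z = 0"
  proof (intro ballI)
    fix z assume zS: "z \<in> S"
    show "R z = 0"
    proof (rule analytic_continuation[OF holR _ _ _ _ real_islimpt[of "\<rho>/4" q]])
      show "open S" "connected S" unfolding S_def by (auto intro: convex_connected)
      show "of_real ` {q - \<rho> / 4<..<q + \<rho> / 4} \<subseteq> S"
      proof
        fix y :: complex assume "y \<in> of_real ` {q - \<rho> / 4<..<q + \<rho> / 4}"
        then obtain x where x: "y = of_real x" "q - \<rho> / 4 < x" "x < q + \<rho> / 4" by auto
        then have "\<bar>q - x\<bar> < \<rho> / 4" by linarith
        moreover have "dist (of_real q) y = \<bar>q - x\<bar>" unfolding x(1) dist_norm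
          by (metis norm_of_real of_real_diff)
        ultimately show "y \<in> S" unfolding S_def by simp
      qed
      show "of_real q \<in> S" unfolding S_def using \<rho> by simp
      show "0 < \<rho> / 4" using \<rho> by simp
      fix y :: complex assume "y \<in> of_real ` {q - \<rho> / 4<..<q + \<rho> / 4}"
      then obtain x where "y = of_real x" "x \<in> {q - \<rho> / 4<..<q + \<rho> / 4}" by auto
      then have yS: "y \<in> S" using \<open>of_real ` _ \<subseteq> S\<close> \<open>y \<in> of_real ` _\<close> by blast
      have yI: "Im y = 0" using \<open>y = of_real x\<close> by simp
      show "R y = 0" unfolding R_def using H0[OF yS yI] yI by simp
    qed (rule zS)
  qed
  have GS: "G z = 1 / (z - w)" if "z \<in> S" "0 < Im z" for z
    using R0 that unfolding R_def H_def by auto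
  have all: "G z = 1 / (z - w)" if z: "z \<in> \<Omega> - {w}" for z
  proof (rule analytic_continuation_open[where s="S \<inter> {z. 0 < Im z}" and s'="\<Omega> - {w}" and f=G and g="\<lambda>z. 1 / (z - w)"])
    show "open (S \<inter> {z. 0 < Im z})" unfolding S_def by (intro open_Int open_ball open_halfspace_Im_gt)
    show "open (\<Omega> - {w})" unfolding \<Omega>_def by (intro open_Diff open_uhd) auto
    have "of_real q + \<i> * of_real (\<rho> / 8) \<in> S \<inter> {z. 0 < Im z}" unfolding S_def using \<rho> by (simp add: dist_norm norm_mult)
    then show "S \<inter> {z. 0 < Im z} \<noteq> {}" by blast
    have "connected \<Omega>" unfolding \<Omega>_def upper_half_disc_def
      by (intro convex_connected convex_Int convex_ball convex_halfspace_Im_gt)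
    then show "connected (\<Omega> - {w})" unfolding \<Omega>_def by (intro connected_open_delete open_uhd) auto
    show "S \<inter> {z. 0 < Im z} \<subseteq> \<Omega> - {w}" using SO wS by auto
    show "G holomorphic_on \<Omega> - {w}" using hol unfolding \<Omega>_def by (rule holomorphic_on_subset) auto
    show "(\<lambda>z. 1 / (z - w)) holomorphic_on \<Omega> - {w}" by (intro holomorphic_intros) auto
    show "\<And>z. z \<in> S \<inter> {z. 0 < Im z} \<Longrightarrow> G z = 1 / (z - w)" using GS by auto
  qed (rule z)
  show False
  proof (rule pole_contra[OF \<rho> w _ _ _])
    show "\<bar>\<rho> / 2\<bar> = \<rho> / 2" using \<rho> by simp
    fix z assume z: "cmod (z - of_real q) < \<rho>" "Im z * (\<rho> / 2) > 0"
    then have zO: "z \<in> \<Omega>" unfolding \<Omega>_def upper_half_disc_def using \<rho>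
      by (auto simp: dist_norm norm_minus_commute zero_less_mult_iff)
    show "cmod (G z) \<le> B" using bnd zO unfolding \<Omega>_def by simp
    show "z \<noteq> w \<Longrightarrow> G z = 1 / (z - w)" using all zO by simp
  qed
qed


lemma open_lhd: "open (lower_half_disc z0 r)"
  unfolding lower_half_disc_def by (intro open_Int open_ball open_halfspace_Im_lt)

lemma cnj_uhd: "cnj z \<in> lower_half_disc (of_real q) \<rho> \<longleftrightarrow> z \<in> upper_half_disc (of_real q) \<rho>"
proof -
  have "cmod (cnj z - of_real q) = cmod (z - of_real q)"
    by (metis complex_cnj_complex_of_real complex_cnj_diff complex_mod_cnj)
  then show ?thesis unfolding lower_half_disc_def upper_half_disc_def
    by (simp add: dist_norm norm_minus_commute)
qed

lemma cnj_lhd: "cnj z \<in> upper_half_disc (of_real q) \<rho> \<longleftrightarrow> z \<in> lower_half_disc (of_real q) \<rho>"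
  using cnj_uhd[of "cnj z"] by simp

lemma hol_cnj_transfer:
  assumes "open A" "open B" "\<And>z. z \<in> A \<Longrightarrow> cnj z \<in> B" "g holomorphic_on B"
  shows "(\<lambda>z. cnj (g (cnj z))) holomorphic_on A"
proof -
  have "\<exists>f'. ((\<lambda>z. cnj (g (cnj z))) has_field_derivative f') (at x)" if x: "x \<in> A" for x
  proof -
    obtain f' where "(g has_field_derivative f') (at (cnj x))"
      using assms(2,4) assms(3)[OF x] unfolding holomorphic_on_open[OF assms(2)] by blast
    then have "((cnj \<circ> g \<circ> cnj) has_field_derivative cnj f') (at x)"
      by (intro has_field_derivative_cnj_cnj) simp
    then show ?thesis by (auto simp: o_def)
  qed
  then show ?thesis unfolding holomorphic_on_open[OF assms(1)] by blast
qed

lemma cont_cnj_transfer: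
  assumes "continuous_on B g" "\<And>z. z \<in> A \<Longrightarrow> cnj z \<in> B"
  shows "continuous_on A (\<lambda>z. cnj (g (cnj z)))"
proof -
  have "continuous_on A (\<lambda>z. g (cnj z))"
    by (rule continuous_on_compose2[OF assms(1) continuous_on_cnj[OF continuous_on_id]]) (use assms(2) in auto)
  then show ?thesis by (rule continuous_on_cnj)
qed

lemma closed_core_lower:
  fixes g :: "nat \<Rightarrow> complex \<Rightarrow> complex" and un :: "nat \<Rightarrow> real \<Rightarrow> complex" and u :: "real \<Rightarrow> complex"
  assumes \<rho>: "\<rho> > 0"
    and hol: "\<And>n. g n holomorphic_on lower_half_disc (of_real q) \<rho>"
    and cont: "\<And>n. continuous_on (lower_half_disc (of_real q) \<rho> \<union> of_real ` {q-\<rho><..<q+\<rho>}) (g n)"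
    and bnd: "\<And>n z. z \<in> lower_half_disc (of_real q) \<rho> \<Longrightarrow> cmod (g n z) \<le> M"
    and eq: "\<And>n x. x \<in> {q-\<rho><..<q+\<rho>} \<Longrightarrow> g n (of_real x) = un n x"
    and conv: "\<And>e. e > 0 \<Longrightarrow> \<exists>N. \<forall>n\<ge>N. \<forall>x\<in>{q-\<rho><..<q+\<rho>}. cmod (un n x - u x) < e"
  shows "\<exists>G. G holomorphic_on lower_half_disc (of_real q) \<rho> \<and>
    continuous_on (lower_half_disc (of_real q) \<rho> \<union> of_real ` {q-\<rho><..<q+\<rho>}) G \<and>
    (\<forall>z\<in>lower_half_disc (of_real q) \<rho>. cmod (G z) \<le> M) \<and> (\<forall>x\<in>{q-\<rho><..<q+\<rho>}. G (of_real x) = u x)"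
proof -
  have m1: "cnj z \<in> lower_half_disc (of_real q) \<rho> \<union> of_real ` {q-\<rho><..<q+\<rho>}"
    if "z \<in> upper_half_disc (of_real q) \<rho> \<union> of_real ` {q-\<rho><..<q+\<rho>}" for z
    using that cnj_uhd by auto
  have m2: "cnj z \<in> upper_half_disc (of_real q) \<rho> \<union> of_real ` {q-\<rho><..<q+\<rho>}"
    if "z \<in> lower_half_disc (of_real q) \<rho> \<union> of_real ` {q-\<rho><..<q+\<rho>}" for z
    using that cnj_lhd by auto
  obtain G' where G': "G' holomorphic_on upper_half_disc (of_real q) \<rho>"
    "continuous_on (upper_half_disc (of_real q) \<rho> \<union> of_real ` {q-\<rho><..<q+\<rho>}) G'"
    "\<forall>z\<in>upper_half_disc (of_real q) \<rho>. cmod (G' z) \<le> M"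
    "\<forall>x\<in>{q-\<rho><..<q+\<rho>}. G' (of_real x) = cnj (u x)"
  proof (atomize_elim, rule closed_core_upper[OF \<rho>, where g="\<lambda>n z. cnj (g n (cnj z))" and un="\<lambda>n x. cnj (un n x)"])
    show "\<And>n. (\<lambda>z. cnj (g n (cnj z))) holomorphic_on upper_half_disc (of_real q) \<rho>"
      by (rule hol_cnj_transfer[OF open_uhd open_lhd _ hol]) (simp add: cnj_uhd)
    show "\<And>n. continuous_on (upper_half_disc (of_real q) \<rho> \<union> of_real ` {q-\<rho><..<q+\<rho>}) (\<lambda>z. cnj (g n (cnj z)))"
      by (rule cont_cnj_transfer[OF cont m1])
    show "\<And>n z. z \<in> upper_half_disc (of_real q) \<rho> \<Longrightarrow> cmod (cnj (g n (cnj z))) \<le> M"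
      using bnd cnj_uhd by simp
    show "\<And>n x. x \<in> {q-\<rho><..<q+\<rho>} \<Longrightarrow> cnj (g n (cnj (of_real x))) = cnj (un n x)"
      using eq by simp
    show "\<And>e. 0 < e \<Longrightarrow> \<exists>N. \<forall>n\<ge>N. \<forall>x\<in>{q-\<rho><..<q+\<rho>}. cmod (cnj (un n x) - cnj (u x)) < e"
      using conv by (metis complex_cnj_diff complex_mod_cnj)
  qed
  show ?thesis
  proof (intro exI[of _ "\<lambda>z. cnj (G' (cnj z))"] conjI ballI)
    show "(\<lambda>z. cnj (G' (cnj z))) holomorphic_on lower_half_disc (of_real q) \<rho>"
      by (rule hol_cnj_transfer[OF open_lhd open_uhd _ G'(1)]) (simp add: cnj_lhd)
    show "continuous_on (lower_half_disc (of_real q) \<rho> \<union> of_real ` {q-\<rho><..<q+\<rho>}) (\<lambda>z. cnj (G' (cnj z)))"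
      by (rule cont_cnj_transfer[OF G'(2) m2])
    show "cmod (cnj (G' (cnj z))) \<le> M" if "z \<in> lower_half_disc (of_real q) \<rho>" for z
      using G'(3) that cnj_lhd by simp
    show "cnj (G' (cnj (of_real x))) = u x" if "x \<in> {q-\<rho><..<q+\<rho>}" for x
      using G'(4) that by simp
  qed
qed

lemma noext_lower:
  fixes G :: "complex \<Rightarrow> complex"
  assumes \<rho>: "\<rho> > 0"
    and hol: "G holomorphic_on lower_half_disc (of_real q) \<rho>"
    and cont: "continuous_on (lower_half_disc (of_real q) \<rho> \<union> of_real ` {q-\<rho><..<q+\<rho>}) G"
    and bnd: "\<And>z. z \<in> lower_half_disc (of_real q) \<rho> \<Longrightarrow> cmod (G z) \<le> B"
    and eq: "\<And>x. x \<in> {q-\<rho><..<q+\<rho>} \<Longrightarrow> G (of_real x) = 1 / (of_real x - w)"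
    and w: "w = of_real q - \<i> * of_real (\<rho> / 2)"
  shows False
proof (rule noext_upper[OF \<rho>, where G="\<lambda>z. cnj (G (cnj z))" and B=B and w="cnj w"])
  show "(\<lambda>z. cnj (G (cnj z))) holomorphic_on upper_half_disc (of_real q) \<rho>"
    by (rule hol_cnj_transfer[OF open_uhd open_lhd _ hol]) (simp add: cnj_uhd)
  show "continuous_on (upper_half_disc (of_real q) \<rho> \<union> of_real ` {q-\<rho><..<q+\<rho>}) (\<lambda>z. cnj (G (cnj z)))"
    by (rule cont_cnj_transfer[OF cont]) (use cnj_uhd in auto)
  show "\<And>z. z \<in> upper_half_disc (of_real q) \<rho> \<Longrightarrow> cmod (cnj (G (cnj z))) \<le> B"
    using bnd cnj_uhd by simp
  show "\<And>x. x \<in> {q-\<rho><..<q+\<rho>} \<Longrightarrow> cnj (G (cnj (of_real x))) = 1 / (of_real x - cnj w)"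
    using eq by simp
  show "cnj w = of_real q + \<i> * of_real (\<rho> / 2)" using w by simp
qed

lemma closed_core_ball:
  fixes g :: "nat \<Rightarrow> complex \<Rightarrow> complex" and un :: "nat \<Rightarrow> real \<Rightarrow> complex" and u :: "real \<Rightarrow> complex"
  assumes \<rho>: "\<rho> > 0"
    and hol: "\<And>n. g n holomorphic_on ball (of_real q) \<rho>"
    and bnd: "\<And>n z. z \<in> ball (of_real q) \<rho> \<Longrightarrow> cmod (g n z) \<le> M"
    and eq: "\<And>n x. x \<in> {q-\<rho><..<q+\<rho>} \<Longrightarrow> g n (of_real x) = un n x"
    and conv: "\<And>x. x \<in> {q-\<rho><..<q+\<rho>} \<Longrightarrow> (\<lambda>n. un n x) \<longlonglongrightarrow> u x"
  shows "\<exists>G. G holomorphic_on ball (of_real q) \<rho> \<and>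
    (\<forall>z\<in>ball (of_real q) \<rho>. cmod (G z) \<le> M) \<and> (\<forall>x\<in>{q-\<rho><..<q+\<rho>}. G (of_real x) = u x)"
proof -
  obtain G0 r where G0hol: "G0 holomorphic_on ball (of_real q) \<rho>" and r: "strict_mono (r :: nat \<Rightarrow> nat)"
    and G0lim: "\<And>x. x \<in> ball (of_real q) \<rho> \<Longrightarrow> (\<lambda>n. g (r n) x) \<longlonglongrightarrow> G0 x"
  proof (rule Montel[OF open_ball[of "of_real q" \<rho>], of "{f. f holomorphic_on ball (of_real q) \<rho> \<and> (\<forall>z\<in>ball (of_real q) \<rho>. cmod (f z) \<le> M)}" g])
    show "\<And>h. h \<in> {f. f holomorphic_on ball (of_real q) \<rho> \<and> (\<forall>z\<in>ball (of_real q) \<rho>. cmod (f z) \<le> M)} \<Longrightarrow> h holomorphic_on ball (of_real q) \<rho>" by auto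
    show "\<And>K. compact K \<Longrightarrow> K \<subseteq> ball (of_real q) \<rho> \<Longrightarrow> \<exists>B. \<forall>h\<in>{f. f holomorphic_on ball (of_real q) \<rho> \<and> (\<forall>z\<in>ball (of_real q) \<rho>. cmod (f z) \<le> M)}. \<forall>z\<in>K. cmod (h z) \<le> B"
      by (rule exI[of _ M]) auto
    show "range g \<subseteq> {f. f holomorphic_on ball (of_real q) \<rho> \<and> (\<forall>z\<in>ball (of_real q) \<rho>. cmod (f z) \<le> M)}"
      using hol bnd by auto
  qed blast
  show ?thesis
  proof (intro exI[of _ G0] conjI ballI G0hol)
    fix z :: complex assume z: "z \<in> ball (of_real q) \<rho>"
    show "cmod (G0 z) \<le> M"
      by (rule Lim_norm_ubound[OF _ G0lim[OF z]]) (use bnd z in auto)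
  next
    fix x assume x: "x \<in> {q-\<rho><..<q+\<rho>}"
    have xb: "of_real x \<in> ball (of_real q :: complex) \<rho>"
      using x by (simp add: dist_norm abs_less_iff flip: of_real_diff)
    have "(\<lambda>n. un (r n) x) \<longlonglongrightarrow> u x" using LIMSEQ_subseq_LIMSEQ[OF conv[OF x] r] by (simp add: o_def)
    moreover have "(\<lambda>n. un (r n) x) \<longlonglongrightarrow> G0 (of_real x)" using G0lim[OF xb] eq[OF x] by simp
    ultimately show "G0 (of_real x) = u x" using LIMSEQ_unique by blast
  qed
qed

lemma noext_ball:
  fixes F :: "complex \<Rightarrow> complex"
  assumes \<rho>: "\<rho> > 0"
    and hol: "F holomorphic_on ball (of_real q) \<rho>"
    and bnd: "\<And>z. z \<in> ball (of_real q) \<rho> \<Longrightarrow> cmod (F z) \<le> B"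
    and eq: "\<And>x. x \<in> {q-\<rho><..<q+\<rho>} \<Longrightarrow> F (of_real x) = 1 / (of_real x - w)"
    and w: "w = of_real q + \<i> * of_real (\<rho> / 2)"
  shows False
proof -
  define S where "S = ball (of_real q :: complex) \<rho> - {w}"
  have wR: "Im w \<noteq> 0" using w \<rho> by simp
  have Usub: "of_real ` {q - \<rho> / 4<..<q + \<rho> / 4} \<subseteq> S"
  proof
    fix y :: complex assume "y \<in> of_real ` {q - \<rho> / 4<..<q + \<rho> / 4}"
    then obtain x where x: "y = of_real x" "q - \<rho> / 4 < x" "x < q + \<rho> / 4" by auto
    then have "\<bar>q - x\<bar> < \<rho>" using \<rho> by linarith
    moreover have "dist (of_real q) y = \<bar>q - x\<bar>" unfolding x(1) dist_norm
      by (metis norm_of_real of_real_diff)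
    moreover have "y \<noteq> w" using wR x(1) by auto
    ultimately show "y \<in> S" unfolding S_def by simp
  qed
  have all: "F z - 1 / (z - w) = 0" if z: "z \<in> S" for z
  proof (rule analytic_continuation[where f="\<lambda>z. F z - 1 / (z - w)" and S=S, OF _ _ _ Usub _ real_islimpt[of "\<rho>/4" q] _ z])
    show "(\<lambda>z. F z - 1 / (z - w)) holomorphic_on S"
      unfolding S_def by (intro holomorphic_intros holomorphic_on_subset[OF hol]) auto
    show "open S" unfolding S_def by auto
    show "connected S" unfolding S_def by (intro connected_open_delete convex_connected) auto
    show "of_real q \<in> S" unfolding S_def using \<rho> wR by auto
    show "0 < \<rho> / 4" using \<rho> by simp
    fix y :: complex assume y: "y \<in> of_real ` {q - \<rho> / 4<..<q + \<rho> / 4}"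
    then obtain x where x: "y = of_real x" "q - \<rho> / 4 < x" "x < q + \<rho> / 4" by auto
    then have "x \<in> {q-\<rho><..<q+\<rho>}" using \<rho> by auto
    then show "F y - 1 / (y - w) = 0" using eq x(1) by simp
  qed
  show False
  proof (rule pole_contra[OF \<rho> w _ _ _])
    show "\<bar>\<rho> / 2\<bar> = \<rho> / 2" using \<rho> by simp
    fix z assume z: "cmod (z - of_real q) < \<rho>" "Im z * (\<rho> / 2) > 0"
    then have zb: "z \<in> ball (of_real q) \<rho>" by (simp add: dist_norm norm_minus_commute)
    show "cmod (F z) \<le> B" using bnd zb by simp
    show "z \<noteq> w \<Longrightarrow> F z = 1 / (z - w)" using all zb unfolding S_def by auto
  qed
qed



lemma dense_gdelta_complement:
  assumes X: "completely_metrizable_space X" and cA: "countable \<A>"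
    and A: "\<And>A. A \<in> \<A> \<Longrightarrow> closedin X A \<and> X interior_of A = {}"
  shows "dense_gdelta X (topspace X - \<Union>\<A>)"
proof -
  define \<G> where "\<G> = insert (topspace X) ((\<lambda>A. topspace X - A) ` \<A>)"
  have cG: "countable \<G>" unfolding \<G>_def using cA by simp
  have eq: "\<Inter>\<G> = topspace X - \<Union>\<A>" unfolding \<G>_def by auto
  have G: "openin X T \<and> X closure_of T = topspace X" if T: "T \<in> \<G>" for T
  proof -
    consider "T = topspace X" | A where "A \<in> \<A>" "T = topspace X - A" using T unfolding \<G>_def by blast
    then show ?thesis
    proof cases
      case 1 then show ?thesis by simp
    next
      case 2
      then show ?thesis using A[OF 2(1)] by (simp add: closure_of_complement openin_diff)
    qed
  qed
  have "X closure_of \<Inter>\<G> = topspace X"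
    by (rule Baire_category[OF disjI1[OF X] cG G])
  moreover have "gdelta_in X (\<Inter>\<G>)"
    unfolding gdelta_in_alt
  proof
    show "\<Inter>\<G> \<subseteq> topspace X" unfolding \<G>_def by auto
    show "(countable intersection_of openin X) (\<Inter>\<G>)"
      unfolding intersection_of_def using cG G by blast
  qed
  ultimately show ?thesis unfolding dense_gdelta_def eq by simp
qed

context ck
begin

interpretation CM: Metric_space "Ck c d k" dC by (rule metric)

definition Pj :: "complex \<Rightarrow> nat \<Rightarrow> complex \<Rightarrow> complex" where
  "Pj w j z = (-1) ^ j * of_nat (fact j) * inverse (z - w) ^ Suc j"

lemma Pj_deriv:
  assumes "z \<noteq> w"
  shows "(Pj w j has_field_derivative Pj w (Suc j) z) (at z)"
proof -
  have nz: "z - w \<noteq> 0" using assms by simp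
  define I where "I = inverse (z - w)"
  have d1: "((\<lambda>z. inverse (z - w)) has_field_derivative (- (I * I))) (at z)"
    unfolding I_def using nz by (auto intro!: derivative_eq_intros simp: power2_eq_square)
  have "(Pj w j has_field_derivative
      (-1) ^ j * of_nat (fact j) * (of_nat (Suc j) * (- (I * I) * I ^ (Suc j - Suc 0)))) (at z)"
    unfolding Pj_def I_def by (rule DERIV_cmult[OF DERIV_power[OF d1[unfolded I_def]]])
  moreover have "(-1) ^ j * of_nat (fact j) * (of_nat (Suc j) * (- (I * I) * I ^ (Suc j - Suc 0))) = Pj w (Suc j) z"
    unfolding Pj_def I_def[symmetric] by (simp add: algebra_simps)
  ultimately show ?thesis by simp
qed

definition fw :: "complex \<Rightarrow> real \<Rightarrow> complex" where
  "fw w x = (if x \<in> {c..d} then 1 / (of_real x - w) else 0)"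

lemma fw_Ck:
  assumes "Im w \<noteq> 0"
  shows "fw w \<in> Ck c d k"
proof -
  define D where "D j = (if j = 0 then fw w else (\<lambda>x. Pj w j (of_real x)))" for j
  have nz: "of_real x \<noteq> w" for x using assms by auto
  have DP: "D j x = Pj w j (of_real x)" if "x \<in> {c..d}" for j x
    using that unfolding D_def fw_def Pj_def by (auto simp: divide_inverse)
  have hd: "has_derivs c d k D"
    unfolding has_derivs_def
  proof (intro conjI allI impI)
    fix j x assume "enat j < k" and x: "x \<in> {c..d}"
    have "((\<lambda>x. Pj w j (of_real x)) has_vector_derivative Pj w (Suc j) (of_real x)) (at x within {c..d})"
      by (rule has_vector_derivative_real_field[OF Pj_deriv[OF nz]])
    then show "(D j has_vector_derivative D (Suc j) x) (at x within {c..d})"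
      using DP x by (intro has_vector_derivative_transform[OF x, of "D j"]) (auto simp: D_def)
  next
    fix j :: nat
    have "continuous_on {c..d} (\<lambda>x. Pj w j (of_real x))"
      unfolding Pj_def using nz by (intro continuous_intros) auto
    then show "continuous_on {c..d} (D j)" by (rule continuous_on_eq) (use DP in auto)
  qed
  show ?thesis unfolding Ck_def using hd by (auto simp: fw_def D_def intro!: exI[of _ D])
qed

lemma line_close:
  assumes u: "u \<in> Ck c d k" and f: "f \<in> Ck c d k" and r: "r > 0"
  shows "\<exists>t0>0. (\<lambda>x. u x + complex_of_real t0 * f x) \<in> CM.mball u r"
proof -
  obtain N :: nat where N: "2 / r < 2 ^ N" using real_arch_pow[of 2 "2 / r"] by auto
  have Nr: "1 / 2 ^ N < r / 2" using N r by (simp add: field_simps)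
  define P where "P = (\<Sum>j\<in>J \<inter> {..N}. p j f)"
  have Pge: "p j f \<le> P" if "j \<in> J" "j \<le> N" for j
  proof -
    have "p j f = (\<Sum>j\<in>{j}. p j f)" by simp
    also have "\<dots> \<le> P" unfolding P_def
      by (rule sum_mono2) (use that p_nonneg[OF f] in \<open>auto simp: J_def\<close>)
    finally show ?thesis .
  qed
  have P0: "0 \<le> P" unfolding P_def using p_nonneg[OF f] by (intro sum_nonneg) (auto simp: J_def)
  define t0 where "t0 = r / (4 * (P + 1))"
  have t0: "t0 > 0" unfolding t0_def using r P0 by simp
  have t0P: "t0 * P < r / 2"
  proof -
    have "t0 * P \<le> t0 * (P + 1)" using t0 by simp
    also have "\<dots> = r / 4" unfolding t0_def using P0 by (simp add: field_simps)
    finally show ?thesis using r by simp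
  qed
  define v where "v = (\<lambda>x. u x + complex_of_real t0 * f x)"
  have vM: "v \<in> Ck c d k" unfolding v_def by (intro Ck_add Ck_scale u f)
  have "dC u v \<le> r / 2"
  proof (rule dC_le[OF u vM])
    fix j assume j: "j \<in> J"
    have jk: "enat j \<le> k" using j unfolding J_def by simp
    show "trm j u v \<le> r / 2"
    proof (cases "j \<le> N")
      case True
      have "p j (u - v) \<le> t0 * p j f"
      proof (rule p_le)
        fix x assume x: "x \<in> {c..d}"
        have e1: "Dv j (u - v) x = Dv j u x - Dv j v x" by (rule Ck_minus(2)[OF u vM jk x])
        have e2: "Dv j v x = Dv j u x + complex_of_real t0 * Dv j f x"
          unfolding v_def using Ck_add(2)[OF u Ck_scale(1)[OF f] jk x] Ck_scale(2)[OF f jk x] by simp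
        have "Dv j (u - v) x = - (complex_of_real t0 * Dv j f x)" unfolding e1 e2 by simp
        then show "cmod (Dv j (u - v) x) \<le> t0 * p j f"
          using p_ge[OF f jk x] t0 by (simp add: norm_mult mult_left_mono)
      qed
      then have "p j (u - v) < r / 2" using Pge[OF j True] t0 t0P
        by (smt (verit) mult_left_mono)
      then show ?thesis using trm_le_p[OF u vM j] by linarith
    next
      case False
      then have "(1::real) / 2 ^ j \<le> 1 / 2 ^ N" by (simp add: frac_le)
      then show ?thesis using trm_le_pow[of j u v] Nr by linarith
    qed
  qed
  then have "v \<in> CM.mball u r" using u vM r by simp
  then show ?thesis using t0 unfolding v_def by blast
qed

end


context ck
begin

interpretation CM: Metric_space "Ck c d k" dC by (rule metric)

definition A2 :: "real \<Rightarrow> real \<Rightarrow> nat \<Rightarrow> (real \<Rightarrow> complex) set" where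
  "A2 q \<rho> M = {u \<in> Ck c d k. \<exists>g. g holomorphic_on upper_half_disc (of_real q) \<rho> \<and>
     continuous_on (upper_half_disc (of_real q) \<rho> \<union> of_real ` {q-\<rho><..<q+\<rho>}) g \<and>
     (\<forall>z\<in>upper_half_disc (of_real q) \<rho>. cmod (g z) \<le> real M) \<and> (\<forall>x\<in>{q-\<rho><..<q+\<rho>}. g (of_real x) = u x)}"

definition A3 :: "real \<Rightarrow> real \<Rightarrow> nat \<Rightarrow> (real \<Rightarrow> complex) set" where
  "A3 q \<rho> M = {u \<in> Ck c d k. \<exists>g. g holomorphic_on lower_half_disc (of_real q) \<rho> \<and>
     continuous_on (lower_half_disc (of_real q) \<rho> \<union> of_real ` {q-\<rho><..<q+\<rho>}) g \<and>
     (\<forall>z\<in>lower_half_disc (of_real q) \<rho>. cmod (g z) \<le> real M) \<and> (\<forall>x\<in>{q-\<rho><..<q+\<rho>}. g (of_real x) = u x)}"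

definition A5 :: "real \<Rightarrow> real \<Rightarrow> nat \<Rightarrow> (real \<Rightarrow> complex) set" where
  "A5 q \<rho> M = {u \<in> Ck c d k. \<exists>g. g holomorphic_on ball (of_real q) \<rho> \<and>
     (\<forall>z\<in>ball (of_real q) \<rho>. cmod (g z) \<le> real M) \<and> (\<forall>x\<in>{q-\<rho><..<q+\<rho>}. g (of_real x) = u x)}"

definition Idx :: "(real \<times> real \<times> nat) set" where
  "Idx = {(q, \<rho>, M). q \<in> \<rat> \<and> \<rho> \<in> \<rat> \<and> 0 < \<rho> \<and> c \<le> q - \<rho> \<and> q + \<rho> \<le> d}"

lemma countable_Idx: "countable Idx"
proof (rule countable_subset)
  show "Idx \<subseteq> \<rat> \<times> \<rat> \<times> (UNIV :: nat set)" unfolding Idx_def by auto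
  show "countable (\<rat> \<times> \<rat> \<times> (UNIV :: nat set))" by (intro countable_SIGMA countable_rat) simp
qed

lemma topspace_X: "topspace (Ck_topology c d k) = Ck c d k"
  unfolding topology_eq_metric by simp

lemma choose_q\<rho>:
  assumes "x0 \<in> {c..d}" "r > 0"
  obtains q \<rho> where "q \<in> \<rat>" "\<rho> \<in> \<rat>" "0 < \<rho>" "c \<le> q - \<rho>" "q + \<rho> \<le> d" "\<bar>q - x0\<bar> < r / 4" "\<rho> < r / 4"
proof -
  have "max c (x0 - r / 4) < min d (x0 + r / 4)" using assms cd by auto
  then obtain q where q: "q \<in> \<rat>" "max c (x0 - r / 4) < q" "q < min d (x0 + r / 4)"
    using Rats_dense_in_real by blast
  have "0 < min (r / 4) (min (q - c) (d - q))" using q assms by auto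
  then obtain \<rho> where \<rho>: "\<rho> \<in> \<rat>" "0 < \<rho>" "\<rho> < min (r / 4) (min (q - c) (d - q))"
    using Rats_dense_in_real by blast
  have "\<bar>q - x0\<bar> < r / 4" by (rule abs_less_iff[THEN iffD2]) (use q in auto)
  then show ?thesis by (intro that[of q \<rho>]) (use q \<rho> in auto)
qed

lemma Idx_props:
  assumes "(q, \<rho>, M) \<in> Idx"
  shows "0 < \<rho>" "c \<le> q - \<rho>" "q + \<rho> \<le> d" "q \<in> {c..d}" "{q-\<rho><..<q+\<rho>} \<subseteq> {c..d}"
  using assms unfolding Idx_def by auto

lemma u_cont: "u \<in> Ck c d k \<Longrightarrow> continuous_on {c..d} u"
  using Dv_cont[of u 0] Ck_D(1)[of u] by (simp add: zero_enat_def[symmetric])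

lemma closed_Lc: "closed (Lc c d)"
  unfolding Lc_def by (intro compact_imp_closed compact_continuous_image continuous_intros) auto

lemma cont_u_Re: "u \<in> Ck c d k \<Longrightarrow> continuous_on (Lc c d) (\<lambda>z. u (Re z))"
  by (rule continuous_on_compose2[OF u_cont continuous_on_Re[OF continuous_on_id]]) (auto simp: Lc_def)

lemma real_in_ball:
  "(of_real x :: complex) \<in> ball (of_real q) r \<longleftrightarrow> \<bar>x - q\<bar> < r"
  by (simp add: dist_norm abs_minus_commute flip: of_real_diff)

lemma dist_of_real_le: "cmod (z - of_real x0) \<le> cmod (z - of_real q) + \<bar>q - x0\<bar>"
proof -
  have "cmod (z - of_real x0) \<le> cmod (z - of_real q) + cmod (of_real q - (of_real x0 :: complex))"
    by (metis diff_add_cancel norm_triangle_ineq add_diff_eq)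
  then show ?thesis by (metis norm_of_real of_real_diff)
qed

lemma ext2:
  assumes u: "u \<in> Ck c d k" and nu: "u \<notin> U2 c d k"
  shows "\<exists>i\<in>Idx. u \<in> (\<lambda>(q, \<rho>, M). A2 q \<rho> M) i"
proof -
  obtain z0 r g where z0: "z0 \<in> Lc c d" and r: "r > 0"
    and cont: "continuous_on (Lc c d \<union> upper_half_disc z0 r) g"
    and hol: "g holomorphic_on upper_half_disc z0 r"
    and eq: "\<forall>x\<in>{c..d}. complex_of_real x \<in> ball z0 r \<longrightarrow> g (complex_of_real x) = u x"
    using nu u unfolding U2_def by blast
  obtain x0 where x0: "x0 \<in> {c..d}" "z0 = of_real x0" using z0 unfolding Lc_def by auto
  obtain q \<rho> where q\<rho>: "q \<in> \<rat>" "\<rho> \<in> \<rat>" "0 < \<rho>" "c \<le> q - \<rho>" "q + \<rho> \<le> d" "\<bar>q - x0\<bar> < r / 4" "\<rho> < r / 4"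
    using choose_q\<rho>[OF x0(1) r] by metis
  define Hc where "Hc = cball (of_real q :: complex) \<rho> \<inter> {z. 0 \<le> Im z}"
  have Hsub: "Hc \<subseteq> Lc c d \<union> upper_half_disc z0 r"
  proof
    fix y assume y: "y \<in> Hc"
    have "cmod (y - of_real x0) \<le> cmod (y - of_real q) + \<bar>q - x0\<bar>" by (rule dist_of_real_le)
    moreover have "cmod (y - of_real q) \<le> \<rho>" using y unfolding Hc_def by (simp add: dist_norm norm_minus_commute)
    ultimately have yr: "cmod (y - of_real x0) < r" using q\<rho> by linarith
    show "y \<in> Lc c d \<union> upper_half_disc z0 r"
    proof (cases "Im y = 0")
      case True
      then have ye: "y = of_real (Re y)" by (simp add: complex_eq_iff)
      have "\<bar>Re y - q\<bar> \<le> \<rho>" using \<open>cmod (y - of_real q) \<le> \<rho>\<close> ye by (metis norm_of_real of_real_diff)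
      then have "Re y \<in> {c..d}" using q\<rho> by (auto simp: abs_le_iff)
      then show ?thesis unfolding Lc_def using ye by blast
    next
      case False
      then show ?thesis using y yr x0 unfolding Hc_def upper_half_disc_def by (auto simp: dist_norm norm_minus_commute)
    qed
  qed
  have cH: "compact Hc" unfolding Hc_def by (intro compact_Int_closed compact_cball closed_halfspace_Im_ge)
  have "compact (g ` Hc)" by (rule compact_continuous_image[OF continuous_on_subset[OF cont Hsub] cH])
  then obtain B where B: "\<And>y. y \<in> Hc \<Longrightarrow> cmod (g y) \<le> B"
    using compact_imp_bounded[of "g ` Hc"] unfolding bounded_iff by auto
  define M where "M = nat \<lceil>B\<rceil>"
  have BM: "B \<le> real M" unfolding M_def by (rule real_nat_ceiling_ge)
  have uhdH: "upper_half_disc (of_real q) \<rho> \<subseteq> Hc" unfolding upper_half_disc_def Hc_def by auto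
  have DmH: "of_real ` {q-\<rho><..<q+\<rho>} \<subseteq> Hc" unfolding Hc_def
    by (auto simp: dist_norm abs_minus_commute simp flip: of_real_diff)
  have uhdsub: "upper_half_disc (of_real q) \<rho> \<subseteq> upper_half_disc z0 r"
  proof
    fix y assume y: "y \<in> upper_half_disc (of_real q) \<rho>"
    have "cmod (y - of_real x0) \<le> cmod (y - of_real q) + \<bar>q - x0\<bar>" by (rule dist_of_real_le)
    moreover have "cmod (y - of_real q) < \<rho>" using y unfolding upper_half_disc_def by (simp add: dist_norm norm_minus_commute)
    ultimately have "cmod (y - of_real x0) < r" using q\<rho> by linarith
    then show "y \<in> upper_half_disc z0 r" using y x0 unfolding upper_half_disc_def by (simp add: dist_norm norm_minus_commute)
  qed
  have "u \<in> A2 q \<rho> M"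
    unfolding A2_def
  proof (intro CollectI conjI exI[of _ g] ballI u)
    show "g holomorphic_on upper_half_disc (of_real q) \<rho>" by (rule holomorphic_on_subset[OF hol uhdsub])
    show "continuous_on (upper_half_disc (of_real q) \<rho> \<union> of_real ` {q-\<rho><..<q+\<rho>}) g"
      by (rule continuous_on_subset[OF cont]) (use Hsub uhdH DmH in blast)
    show "cmod (g z) \<le> real M" if "z \<in> upper_half_disc (of_real q) \<rho>" for z
      using B[of z] uhdH that BM by auto
    fix x assume x: "x \<in> {q-\<rho><..<q+\<rho>}"
    then have xI: "x \<in> {c..d}" using q\<rho> by auto
    have "q - \<rho> < x" "x < q + \<rho>" using x by auto
    then have "\<bar>x - x0\<bar> < r" using q\<rho>(6,7) by linarith
    then have "complex_of_real x \<in> ball z0 r" using x0(2) real_in_ball[of x x0 r] by simp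
    then show "g (complex_of_real x) = u x" using eq xI by blast
  qed
  moreover have "(q, \<rho>, M) \<in> Idx" unfolding Idx_def using q\<rho> by auto
  ultimately show ?thesis by force
qed

lemma back2:
  assumes i: "(q, \<rho>, M) \<in> Idx" and uA: "u \<in> A2 q \<rho> M"
  shows "u \<notin> U2 c d k"
proof -
  note ip = Idx_props[OF i]
  obtain g where u: "u \<in> Ck c d k" and hol: "g holomorphic_on upper_half_disc (of_real q) \<rho>"
    and cont: "continuous_on (upper_half_disc (of_real q) \<rho> \<union> of_real ` {q-\<rho><..<q+\<rho>}) g"
    and eq: "\<And>x. x \<in> {q-\<rho><..<q+\<rho>} \<Longrightarrow> g (of_real x) = u x"
    using uA unfolding A2_def by blast
  define g' where "g' z = (if 0 < Im z then g z else u (Re z))" for z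
  define Hc where "Hc = cball (of_real q :: complex) (\<rho>/2) \<inter> {z. 0 \<le> Im z}"
  have Hsub: "Hc \<subseteq> upper_half_disc (of_real q) \<rho> \<union> of_real ` {q-\<rho><..<q+\<rho>}"
  proof
    fix y assume y: "y \<in> Hc"
    have yq: "cmod (y - of_real q) \<le> \<rho> / 2" using y unfolding Hc_def by (simp add: dist_norm norm_minus_commute)
    show "y \<in> upper_half_disc (of_real q) \<rho> \<union> of_real ` {q-\<rho><..<q+\<rho>}"
    proof (cases "Im y = 0")
      case True
      then have ye: "y = of_real (Re y)" by (simp add: complex_eq_iff)
      have "\<bar>Re y - q\<bar> \<le> \<rho> / 2" using yq ye by (metis norm_of_real of_real_diff)
      then have "q - \<rho> < Re y \<and> Re y < q + \<rho>" using ip(1) by linarith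
      then have "Re y \<in> {q-\<rho><..<q+\<rho>}" by simp
      then show ?thesis using ye by blast
    next
      case False
      then show ?thesis using y yq ip unfolding Hc_def upper_half_disc_def by (auto simp: dist_norm norm_minus_commute)
    qed
  qed
  have contH: "continuous_on Hc g'"
  proof (rule continuous_on_eq[OF continuous_on_subset[OF cont Hsub]])
    fix y assume y: "y \<in> Hc"
    show "g y = g' y"
    proof (cases "0 < Im y")
      case True then show ?thesis unfolding g'_def by simp
    next
      case False
      then have "Im y = 0" using y unfolding Hc_def by auto
      then have ye: "y = of_real (Re y)" by (simp add: complex_eq_iff)
      have "y \<in> of_real ` {q-\<rho><..<q+\<rho>}" using Hsub y False unfolding upper_half_disc_def by auto
      then have "Re y \<in> {q-\<rho><..<q+\<rho>}" by auto
      then show ?thesis unfolding g'_def using False eq ye by (metis)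
    qed
  qed
  have contL: "continuous_on (Lc c d) g'"
    by (rule continuous_on_eq[OF cont_u_Re[OF u]]) (auto simp: g'_def Lc_def)
  have cH: "closed Hc" unfolding Hc_def by (intro closed_Int closed_cball closed_halfspace_Im_ge)
  have "continuous_on (Lc c d \<union> Hc) g'" by (rule continuous_on_closed_Un[OF closed_Lc cH contL contH])
  moreover have "Lc c d \<union> upper_half_disc (of_real q) (\<rho>/2) \<subseteq> Lc c d \<union> Hc"
    unfolding Hc_def upper_half_disc_def by auto
  ultimately have c2: "continuous_on (Lc c d \<union> upper_half_disc (of_real q) (\<rho>/2)) g'"
    by (rule continuous_on_subset)
  have h2: "g' holomorphic_on upper_half_disc (of_real q) (\<rho>/2)"
  proof (rule holomorphic_transform[OF holomorphic_on_subset[OF hol]])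
    show "upper_half_disc (of_real q) (\<rho> / 2) \<subseteq> upper_half_disc (of_real q) \<rho>"
      unfolding upper_half_disc_def using ip by auto
    show "\<And>x. x \<in> upper_half_disc (of_real q) (\<rho> / 2) \<Longrightarrow> g x = g' x"
      unfolding upper_half_disc_def g'_def by auto
  qed
  have qL: "of_real q \<in> Lc c d" unfolding Lc_def using ip by auto
  show ?thesis
    unfolding U2_def using qL c2 h2 ip(1)
    by (auto intro!: exI[of _ "of_real q"] exI[of _ "\<rho>/2"] exI[of _ g'] simp: g'_def)
qed

lemma conv_unif:
  assumes \<sigma>: "\<And>n. \<sigma> n \<in> Ck c d k" and lim: "limitin CM.mtopology \<sigma> u sequentially"
  shows "u \<in> Ck c d k" "\<And>e. e > 0 \<Longrightarrow> \<exists>N. \<forall>n\<ge>N. \<forall>x\<in>{c..d}. cmod (\<sigma> n x - u x) < e"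
proof -
  show u: "u \<in> Ck c d k" using lim unfolding CM.limitin_metric by simp
  fix e :: real assume e: "e > 0"
  define e' where "e' = min 1 e"
  have e': "0 < e'" "e' \<le> 1" "e' \<le> e" unfolding e'_def using e by auto
  have "\<forall>\<^sub>F n in sequentially. \<sigma> n \<in> Ck c d k \<and> dC (\<sigma> n) u < e'"
    using lim e'(1) unfolding CM.limitin_metric by blast
  then obtain N where N: "\<And>n. n \<ge> N \<Longrightarrow> dC (\<sigma> n) u < e'" unfolding eventually_sequentially by blast
  have "\<forall>n\<ge>N. \<forall>x\<in>{c..d}. cmod (\<sigma> n x - u x) < e"
  proof (intro allI impI ballI)
    fix n x assume n: "N \<le> n" and x: "x \<in> {c..d}"
    have "p 0 (\<sigma> n - u) < e'" by (rule p_small[OF \<sigma> u J0 e'(1,2)]) (use N[OF n] in simp)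
    moreover have "cmod (Dv 0 (\<sigma> n) x - Dv 0 u x) \<le> p 0 (\<sigma> n - u)" by (rule Dv_diff_le[OF \<sigma> u J0 x])
    ultimately show "cmod (\<sigma> n x - u x) < e" using Ck_D(1)[OF \<sigma>[of n]] Ck_D(1)[OF u] e'(3) by simp
  qed
  then show "\<exists>N. \<forall>n\<ge>N. \<forall>x\<in>{c..d}. cmod (\<sigma> n x - u x) < e" by blast
qed

lemma closed2:
  assumes i: "(q, \<rho>, M) \<in> Idx"
  shows "closedin (Ck_topology c d k) (A2 q \<rho> M)"
  unfolding topology_eq_metric CM.metric_closedin_iff_sequentially_closed
proof (intro conjI allI impI)
  note ip = Idx_props[OF i]
  show "A2 q \<rho> M \<subseteq> Ck c d k" unfolding A2_def by auto
  fix \<sigma> u assume a: "range \<sigma> \<subseteq> A2 q \<rho> M \<and> limitin CM.mtopology \<sigma> u sequentially"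
  have \<sigma>A: "\<And>n. \<sigma> n \<in> A2 q \<rho> M" using a by auto
  then have \<sigma>M: "\<And>n. \<sigma> n \<in> Ck c d k" unfolding A2_def by auto
  note cu = conv_unif[OF \<sigma>M conjunct2[OF a]]
  have "\<forall>n. \<exists>g. g holomorphic_on upper_half_disc (of_real q) \<rho> \<and>
     continuous_on (upper_half_disc (of_real q) \<rho> \<union> of_real ` {q-\<rho><..<q+\<rho>}) g \<and>
     (\<forall>z\<in>upper_half_disc (of_real q) \<rho>. cmod (g z) \<le> real M) \<and> (\<forall>x\<in>{q-\<rho><..<q+\<rho>}. g (of_real x) = \<sigma> n x)"
    using \<sigma>A unfolding A2_def by blast
  then obtain g where g: "\<And>n. g n holomorphic_on upper_half_disc (of_real q) \<rho>"
    "\<And>n. continuous_on (upper_half_disc (of_real q) \<rho> \<union> of_real ` {q-\<rho><..<q+\<rho>}) (g n)"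
    "\<And>n z. z \<in> upper_half_disc (of_real q) \<rho> \<Longrightarrow> cmod (g n z) \<le> real M"
    "\<And>n x. x \<in> {q-\<rho><..<q+\<rho>} \<Longrightarrow> g n (of_real x) = \<sigma> n x"
    by metis
  have "\<exists>G. G holomorphic_on upper_half_disc (of_real q) \<rho> \<and>
    continuous_on (upper_half_disc (of_real q) \<rho> \<union> of_real ` {q-\<rho><..<q+\<rho>}) G \<and>
    (\<forall>z\<in>upper_half_disc (of_real q) \<rho>. cmod (G z) \<le> real M) \<and> (\<forall>x\<in>{q-\<rho><..<q+\<rho>}. G (of_real x) = u x)"
  proof (rule closed_core_upper[OF ip(1) g(1,2,3,4)])
    fix e :: real assume "e > 0"
    then show "\<exists>N. \<forall>n\<ge>N. \<forall>x\<in>{q-\<rho><..<q+\<rho>}. cmod (\<sigma> n x - u x) < e"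
      using cu(2) ip(5) by (meson subsetD)
  qed
  then show "u \<in> A2 q \<rho> M" unfolding A2_def using cu(1) by blast
qed

lemma interior_mball:
  assumes "u \<in> Ck_topology c d k interior_of A"
  obtains r where "r > 0" "CM.mball u r \<subseteq> A"
proof -
  have "openin CM.mtopology (CM.mtopology interior_of A)" by simp
  moreover have "u \<in> CM.mtopology interior_of A" using assms unfolding topology_eq_metric .
  ultimately obtain r where "r > 0" "CM.mball u r \<subseteq> CM.mtopology interior_of A"
    unfolding CM.openin_mtopology by blast
  then show ?thesis using that interior_of_subset[of CM.mtopology A] by (meson order_trans)
qed

lemma interior2:
  assumes i: "(q, \<rho>, M) \<in> Idx"
  shows "Ck_topology c d k interior_of (A2 q \<rho> M) = {}"
proof (rule ccontr)
  assume "Ck_topology c d k interior_of (A2 q \<rho> M) \<noteq> {}"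
  then obtain u where u: "u \<in> Ck_topology c d k interior_of (A2 q \<rho> M)" by blast
  note ip = Idx_props[OF i]
  obtain r where r: "r > 0" "CM.mball u r \<subseteq> A2 q \<rho> M" using interior_mball[OF u] by blast
  have uA: "u \<in> A2 q \<rho> M" using u interior_of_subset[of "Ck_topology c d k" "A2 q \<rho> M"] by (rule subsetD[rotated])
  then have uM: "u \<in> Ck c d k" unfolding A2_def by auto
  define w where "w = of_real q + \<i> * of_real (\<rho> / 2)"
  have wI: "Im w \<noteq> 0" unfolding w_def using ip by simp
  obtain t0 where t0: "t0 > 0" "(\<lambda>x. u x + complex_of_real t0 * fw w x) \<in> CM.mball u r"
    using line_close[OF uM fw_Ck[OF wI] r(1)] by blast
  define v where "v = (\<lambda>x. u x + complex_of_real t0 * fw w x)"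
  have vA: "v \<in> A2 q \<rho> M" using t0 r unfolding v_def by blast
  obtain g1 where g1: "g1 holomorphic_on upper_half_disc (of_real q) \<rho>"
    "continuous_on (upper_half_disc (of_real q) \<rho> \<union> of_real ` {q-\<rho><..<q+\<rho>}) g1"
    "\<And>z. z \<in> upper_half_disc (of_real q) \<rho> \<Longrightarrow> cmod (g1 z) \<le> real M"
    "\<And>x. x \<in> {q-\<rho><..<q+\<rho>} \<Longrightarrow> g1 (of_real x) = u x"
    using uA unfolding A2_def by blast
  obtain g2 where g2: "g2 holomorphic_on upper_half_disc (of_real q) \<rho>"
    "continuous_on (upper_half_disc (of_real q) \<rho> \<union> of_real ` {q-\<rho><..<q+\<rho>}) g2"
    "\<And>z. z \<in> upper_half_disc (of_real q) \<rho> \<Longrightarrow> cmod (g2 z) \<le> real M"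
    "\<And>x. x \<in> {q-\<rho><..<q+\<rho>} \<Longrightarrow> g2 (of_real x) = v x"
    using vA unfolding A2_def by blast
  define G where "G z = (g2 z - g1 z) / of_real t0" for z
  show False
  proof (rule noext_upper[OF ip(1), where G=G and w=w and B="(real M + real M) / t0"])
    show "G holomorphic_on upper_half_disc (of_real q) \<rho>"
      unfolding G_def using t0 by (intro holomorphic_intros g1(1) g2(1)) auto
    show "continuous_on (upper_half_disc (of_real q) \<rho> \<union> of_real ` {q-\<rho><..<q+\<rho>}) G"
      unfolding G_def using t0 by (intro continuous_intros g1(2) g2(2)) auto
    fix z assume z: "z \<in> upper_half_disc (of_real q) \<rho>"
    have "cmod (g2 z - g1 z) \<le> real M + real M"
      using g1(3)[OF z] g2(3)[OF z] norm_triangle_ineq4[of "g2 z" "g1 z"] by linarith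
    then show "cmod (G z) \<le> (real M + real M) / t0"
      unfolding G_def using t0 by (simp add: norm_divide divide_right_mono)
  next
    fix x assume x: "x \<in> {q-\<rho><..<q+\<rho>}"
    have xI: "x \<in> {c..d}" using x ip(5) by auto
    show "G (of_real x) = 1 / (of_real x - w)"
      unfolding G_def g1(4)[OF x] g2(4)[OF x] v_def fw_def using xI t0 by simp
  qed (simp add: w_def)
qed

lemma ext3:
  assumes u: "u \<in> Ck c d k" and nu: "u \<notin> U3 c d k"
  shows "\<exists>i\<in>Idx. u \<in> (\<lambda>(q, \<rho>, M). A3 q \<rho> M) i"
proof -
  obtain z0 r g where z0: "z0 \<in> Lc c d" and r: "r > 0"
    and cont: "continuous_on (Lc c d \<union> lower_half_disc z0 r) g"
    and hol: "g holomorphic_on lower_half_disc z0 r"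
    and eq: "\<forall>x\<in>{c..d}. complex_of_real x \<in> ball z0 r \<longrightarrow> g (complex_of_real x) = u x"
    using nu u unfolding U3_def by blast
  obtain x0 where x0: "x0 \<in> {c..d}" "z0 = of_real x0" using z0 unfolding Lc_def by auto
  obtain q \<rho> where q\<rho>: "q \<in> \<rat>" "\<rho> \<in> \<rat>" "0 < \<rho>" "c \<le> q - \<rho>" "q + \<rho> \<le> d" "\<bar>q - x0\<bar> < r / 4" "\<rho> < r / 4"
    using choose_q\<rho>[OF x0(1) r] by metis
  define Hc where "Hc = cball (of_real q :: complex) \<rho> \<inter> {z. Im z \<le> 0}"
  have Hsub: "Hc \<subseteq> Lc c d \<union> lower_half_disc z0 r"
  proof
    fix y assume y: "y \<in> Hc"
    have "cmod (y - of_real x0) \<le> cmod (y - of_real q) + \<bar>q - x0\<bar>" by (rule dist_of_real_le)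
    moreover have "cmod (y - of_real q) \<le> \<rho>" using y unfolding Hc_def by (simp add: dist_norm norm_minus_commute)
    ultimately have yr: "cmod (y - of_real x0) < r" using q\<rho> by linarith
    show "y \<in> Lc c d \<union> lower_half_disc z0 r"
    proof (cases "Im y = 0")
      case True
      then have ye: "y = of_real (Re y)" by (simp add: complex_eq_iff)
      have "\<bar>Re y - q\<bar> \<le> \<rho>" using \<open>cmod (y - of_real q) \<le> \<rho>\<close> ye by (metis norm_of_real of_real_diff)
      then have "Re y \<in> {c..d}" using q\<rho> by (auto simp: abs_le_iff)
      then show ?thesis unfolding Lc_def using ye by blast
    next
      case False
      then show ?thesis using y yr x0 unfolding Hc_def lower_half_disc_def by (auto simp: dist_norm norm_minus_commute)
    qed
  qed
  have cH: "compact Hc" unfolding Hc_def by (intro compact_Int_closed compact_cball closed_halfspace_Im_le)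
  have "compact (g ` Hc)" by (rule compact_continuous_image[OF continuous_on_subset[OF cont Hsub] cH])
  then obtain B where B: "\<And>y. y \<in> Hc \<Longrightarrow> cmod (g y) \<le> B"
    using compact_imp_bounded[of "g ` Hc"] unfolding bounded_iff by auto
  define M where "M = nat \<lceil>B\<rceil>"
  have BM: "B \<le> real M" unfolding M_def by (rule real_nat_ceiling_ge)
  have uhdH: "lower_half_disc (of_real q) \<rho> \<subseteq> Hc" unfolding lower_half_disc_def Hc_def by auto
  have DmH: "of_real ` {q-\<rho><..<q+\<rho>} \<subseteq> Hc" unfolding Hc_def
    by (auto simp: dist_norm abs_minus_commute simp flip: of_real_diff)
  have uhdsub: "lower_half_disc (of_real q) \<rho> \<subseteq> lower_half_disc z0 r"
  proof
    fix y assume y: "y \<in> lower_half_disc (of_real q) \<rho>"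
    have "cmod (y - of_real x0) \<le> cmod (y - of_real q) + \<bar>q - x0\<bar>" by (rule dist_of_real_le)
    moreover have "cmod (y - of_real q) < \<rho>" using y unfolding lower_half_disc_def by (simp add: dist_norm norm_minus_commute)
    ultimately have "cmod (y - of_real x0) < r" using q\<rho> by linarith
    then show "y \<in> lower_half_disc z0 r" using y x0 unfolding lower_half_disc_def by (simp add: dist_norm norm_minus_commute)
  qed
  have "u \<in> A3 q \<rho> M"
    unfolding A3_def
  proof (intro CollectI conjI exI[of _ g] ballI u)
    show "g holomorphic_on lower_half_disc (of_real q) \<rho>" by (rule holomorphic_on_subset[OF hol uhdsub])
    show "continuous_on (lower_half_disc (of_real q) \<rho> \<union> of_real ` {q-\<rho><..<q+\<rho>}) g"
      by (rule continuous_on_subset[OF cont]) (use Hsub uhdH DmH in blast)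
    show "cmod (g z) \<le> real M" if "z \<in> lower_half_disc (of_real q) \<rho>" for z
      using B[of z] uhdH that BM by auto
    fix x assume x: "x \<in> {q-\<rho><..<q+\<rho>}"
    then have xI: "x \<in> {c..d}" using q\<rho> by auto
    have "q - \<rho> < x" "x < q + \<rho>" using x by auto
    then have "\<bar>x - x0\<bar> < r" using q\<rho>(6,7) by linarith
    then have "complex_of_real x \<in> ball z0 r" using x0(2) real_in_ball[of x x0 r] by simp
    then show "g (complex_of_real x) = u x" using eq xI by blast
  qed
  moreover have "(q, \<rho>, M) \<in> Idx" unfolding Idx_def using q\<rho> by auto
  ultimately show ?thesis by force
qed

lemma back3:
  assumes i: "(q, \<rho>, M) \<in> Idx" and uA: "u \<in> A3 q \<rho> M"
  shows "u \<notin> U3 c d k"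
proof -
  note ip = Idx_props[OF i]
  obtain g where u: "u \<in> Ck c d k" and hol: "g holomorphic_on lower_half_disc (of_real q) \<rho>"
    and cont: "continuous_on (lower_half_disc (of_real q) \<rho> \<union> of_real ` {q-\<rho><..<q+\<rho>}) g"
    and eq: "\<And>x. x \<in> {q-\<rho><..<q+\<rho>} \<Longrightarrow> g (of_real x) = u x"
    using uA unfolding A3_def by blast
  define g' where "g' z = (if Im z < 0 then g z else u (Re z))" for z
  define Hc where "Hc = cball (of_real q :: complex) (\<rho>/2) \<inter> {z. Im z \<le> 0}"
  have Hsub: "Hc \<subseteq> lower_half_disc (of_real q) \<rho> \<union> of_real ` {q-\<rho><..<q+\<rho>}"
  proof
    fix y assume y: "y \<in> Hc"
    have yq: "cmod (y - of_real q) \<le> \<rho> / 2" using y unfolding Hc_def by (simp add: dist_norm norm_minus_commute)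
    show "y \<in> lower_half_disc (of_real q) \<rho> \<union> of_real ` {q-\<rho><..<q+\<rho>}"
    proof (cases "Im y = 0")
      case True
      then have ye: "y = of_real (Re y)" by (simp add: complex_eq_iff)
      have "\<bar>Re y - q\<bar> \<le> \<rho> / 2" using yq ye by (metis norm_of_real of_real_diff)
      then have "q - \<rho> < Re y \<and> Re y < q + \<rho>" using ip(1) by linarith
      then have "Re y \<in> {q-\<rho><..<q+\<rho>}" by simp
      then show ?thesis using ye by blast
    next
      case False
      then show ?thesis using y yq ip unfolding Hc_def lower_half_disc_def by (auto simp: dist_norm norm_minus_commute)
    qed
  qed
  have contH: "continuous_on Hc g'"
  proof (rule continuous_on_eq[OF continuous_on_subset[OF cont Hsub]])
    fix y assume y: "y \<in> Hc"
    show "g y = g' y"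
    proof (cases "Im y < 0")
      case True then show ?thesis unfolding g'_def by simp
    next
      case False
      then have "Im y = 0" using y unfolding Hc_def by auto
      then have ye: "y = of_real (Re y)" by (simp add: complex_eq_iff)
      have "y \<in> of_real ` {q-\<rho><..<q+\<rho>}" using Hsub y False unfolding lower_half_disc_def by auto
      then have "Re y \<in> {q-\<rho><..<q+\<rho>}" by auto
      then show ?thesis unfolding g'_def using False eq ye by (metis)
    qed
  qed
  have contL: "continuous_on (Lc c d) g'"
    by (rule continuous_on_eq[OF cont_u_Re[OF u]]) (auto simp: g'_def Lc_def)
  have cH: "closed Hc" unfolding Hc_def by (intro closed_Int closed_cball closed_halfspace_Im_le)
  have "continuous_on (Lc c d \<union> Hc) g'" by (rule continuous_on_closed_Un[OF closed_Lc cH contL contH])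
  moreover have "Lc c d \<union> lower_half_disc (of_real q) (\<rho>/2) \<subseteq> Lc c d \<union> Hc"
    unfolding Hc_def lower_half_disc_def by auto
  ultimately have c2: "continuous_on (Lc c d \<union> lower_half_disc (of_real q) (\<rho>/2)) g'"
    by (rule continuous_on_subset)
  have h2: "g' holomorphic_on lower_half_disc (of_real q) (\<rho>/2)"
  proof (rule holomorphic_transform[OF holomorphic_on_subset[OF hol]])
    show "lower_half_disc (of_real q) (\<rho> / 2) \<subseteq> lower_half_disc (of_real q) \<rho>"
      unfolding lower_half_disc_def using ip by auto
    show "\<And>x. x \<in> lower_half_disc (of_real q) (\<rho> / 2) \<Longrightarrow> g x = g' x"
      unfolding lower_half_disc_def g'_def by auto
  qed
  have qL: "of_real q \<in> Lc c d" unfolding Lc_def using ip by auto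
  show ?thesis
    unfolding U3_def using qL c2 h2 ip(1)
    by (auto intro!: exI[of _ "of_real q"] exI[of _ "\<rho>/2"] exI[of _ g'] simp: g'_def)
qed

lemma closed3:
  assumes i: "(q, \<rho>, M) \<in> Idx"
  shows "closedin (Ck_topology c d k) (A3 q \<rho> M)"
  unfolding topology_eq_metric CM.metric_closedin_iff_sequentially_closed
proof (intro conjI allI impI)
  note ip = Idx_props[OF i]
  show "A3 q \<rho> M \<subseteq> Ck c d k" unfolding A3_def by auto
  fix \<sigma> u assume a: "range \<sigma> \<subseteq> A3 q \<rho> M \<and> limitin CM.mtopology \<sigma> u sequentially"
  have \<sigma>A: "\<And>n. \<sigma> n \<in> A3 q \<rho> M" using a by auto
  then have \<sigma>M: "\<And>n. \<sigma> n \<in> Ck c d k" unfolding A3_def by auto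
  note cu = conv_unif[OF \<sigma>M conjunct2[OF a]]
  have "\<forall>n. \<exists>g. g holomorphic_on lower_half_disc (of_real q) \<rho> \<and>
     continuous_on (lower_half_disc (of_real q) \<rho> \<union> of_real ` {q-\<rho><..<q+\<rho>}) g \<and>
     (\<forall>z\<in>lower_half_disc (of_real q) \<rho>. cmod (g z) \<le> real M) \<and> (\<forall>x\<in>{q-\<rho><..<q+\<rho>}. g (of_real x) = \<sigma> n x)"
    using \<sigma>A unfolding A3_def by blast
  then obtain g where g: "\<And>n. g n holomorphic_on lower_half_disc (of_real q) \<rho>"
    "\<And>n. continuous_on (lower_half_disc (of_real q) \<rho> \<union> of_real ` {q-\<rho><..<q+\<rho>}) (g n)"
    "\<And>n z. z \<in> lower_half_disc (of_real q) \<rho> \<Longrightarrow> cmod (g n z) \<le> real M"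
    "\<And>n x. x \<in> {q-\<rho><..<q+\<rho>} \<Longrightarrow> g n (of_real x) = \<sigma> n x"
    by metis
  have "\<exists>G. G holomorphic_on lower_half_disc (of_real q) \<rho> \<and>
    continuous_on (lower_half_disc (of_real q) \<rho> \<union> of_real ` {q-\<rho><..<q+\<rho>}) G \<and>
    (\<forall>z\<in>lower_half_disc (of_real q) \<rho>. cmod (G z) \<le> real M) \<and> (\<forall>x\<in>{q-\<rho><..<q+\<rho>}. G (of_real x) = u x)"
  proof (rule closed_core_lower[OF ip(1) g(1,2,3,4)])
    fix e :: real assume "e > 0"
    then show "\<exists>N. \<forall>n\<ge>N. \<forall>x\<in>{q-\<rho><..<q+\<rho>}. cmod (\<sigma> n x - u x) < e"
      using cu(2) ip(5) by (meson subsetD)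
  qed
  then show "u \<in> A3 q \<rho> M" unfolding A3_def using cu(1) by blast
qed

lemma interior3:
  assumes i: "(q, \<rho>, M) \<in> Idx"
  shows "Ck_topology c d k interior_of (A3 q \<rho> M) = {}"
proof (rule ccontr)
  assume "Ck_topology c d k interior_of (A3 q \<rho> M) \<noteq> {}"
  then obtain u where u: "u \<in> Ck_topology c d k interior_of (A3 q \<rho> M)" by blast
  note ip = Idx_props[OF i]
  obtain r where r: "r > 0" "CM.mball u r \<subseteq> A3 q \<rho> M" using interior_mball[OF u] by blast
  have uA: "u \<in> A3 q \<rho> M" using u interior_of_subset[of "Ck_topology c d k" "A3 q \<rho> M"] by (rule subsetD[rotated])
  then have uM: "u \<in> Ck c d k" unfolding A3_def by auto
  define w where "w = of_real q - \<i> * of_real (\<rho> / 2)"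
  have wI: "Im w \<noteq> 0" unfolding w_def using ip by simp
  obtain t0 where t0: "t0 > 0" "(\<lambda>x. u x + complex_of_real t0 * fw w x) \<in> CM.mball u r"
    using line_close[OF uM fw_Ck[OF wI] r(1)] by blast
  define v where "v = (\<lambda>x. u x + complex_of_real t0 * fw w x)"
  have vA: "v \<in> A3 q \<rho> M" using t0 r unfolding v_def by blast
  obtain g1 where g1: "g1 holomorphic_on lower_half_disc (of_real q) \<rho>"
    "continuous_on (lower_half_disc (of_real q) \<rho> \<union> of_real ` {q-\<rho><..<q+\<rho>}) g1"
    "\<And>z. z \<in> lower_half_disc (of_real q) \<rho> \<Longrightarrow> cmod (g1 z) \<le> real M"
    "\<And>x. x \<in> {q-\<rho><..<q+\<rho>} \<Longrightarrow> g1 (of_real x) = u x"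
    using uA unfolding A3_def by blast
  obtain g2 where g2: "g2 holomorphic_on lower_half_disc (of_real q) \<rho>"
    "continuous_on (lower_half_disc (of_real q) \<rho> \<union> of_real ` {q-\<rho><..<q+\<rho>}) g2"
    "\<And>z. z \<in> lower_half_disc (of_real q) \<rho> \<Longrightarrow> cmod (g2 z) \<le> real M"
    "\<And>x. x \<in> {q-\<rho><..<q+\<rho>} \<Longrightarrow> g2 (of_real x) = v x"
    using vA unfolding A3_def by blast
  define G where "G z = (g2 z - g1 z) / of_real t0" for z
  show False
  proof (rule noext_lower[OF ip(1), where G=G and w=w and B="(real M + real M) / t0"])
    show "G holomorphic_on lower_half_disc (of_real q) \<rho>"
      unfolding G_def using t0 by (intro holomorphic_intros g1(1) g2(1)) auto
    show "continuous_on (lower_half_disc (of_real q) \<rho> \<union> of_real ` {q-\<rho><..<q+\<rho>}) G"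
      unfolding G_def using t0 by (intro continuous_intros g1(2) g2(2)) auto
    fix z assume z: "z \<in> lower_half_disc (of_real q) \<rho>"
    have "cmod (g2 z - g1 z) \<le> real M + real M"
      using g1(3)[OF z] g2(3)[OF z] norm_triangle_ineq4[of "g2 z" "g1 z"] by linarith
    then show "cmod (G z) \<le> (real M + real M) / t0"
      unfolding G_def using t0 by (simp add: norm_divide divide_right_mono)
  next
    fix x assume x: "x \<in> {q-\<rho><..<q+\<rho>}"
    have xI: "x \<in> {c..d}" using x ip(5) by auto
    show "G (of_real x) = 1 / (of_real x - w)"
      unfolding G_def g1(4)[OF x] g2(4)[OF x] v_def fw_def using xI t0 by simp
  qed (simp add: w_def)
qed

lemma ext5:
  assumes u: "u \<in> Ck c d k" and nu: "u \<notin> U5 c d k"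
  shows "\<exists>i\<in>Idx. u \<in> (\<lambda>(q, \<rho>, M). A5 q \<rho> M) i"
proof -
  obtain z0 r g where z0: "z0 \<in> Lc c d" and r: "r > 0"
    and hol: "g holomorphic_on ball z0 r"
    and eq: "\<forall>x\<in>{c..d}. complex_of_real x \<in> ball z0 r \<longrightarrow> g (complex_of_real x) = u x"
    using nu u unfolding U5_def by blast
  obtain x0 where x0: "x0 \<in> {c..d}" "z0 = of_real x0" using z0 unfolding Lc_def by auto
  obtain q \<rho> where q\<rho>: "q \<in> \<rat>" "\<rho> \<in> \<rat>" "0 < \<rho>" "c \<le> q - \<rho>" "q + \<rho> \<le> d" "\<bar>q - x0\<bar> < r / 4" "\<rho> < r / 4"
    using choose_q\<rho>[OF x0(1) r] by metis
  define Hc where "Hc = cball (of_real q :: complex) \<rho>"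
  have Hsub: "Hc \<subseteq> ball z0 r"
  proof
    fix y assume y: "y \<in> Hc"
    have "cmod (y - of_real x0) \<le> cmod (y - of_real q) + \<bar>q - x0\<bar>" by (rule dist_of_real_le)
    moreover have "cmod (y - of_real q) \<le> \<rho>" using y unfolding Hc_def by (simp add: dist_norm norm_minus_commute)
    ultimately have yr: "cmod (y - of_real x0) < r" using q\<rho> by linarith
    then show "y \<in> ball z0 r" using x0 by (simp add: dist_norm norm_minus_commute)
  qed
  have cH: "compact Hc" unfolding Hc_def by simp
  have "compact (g ` Hc)"
    by (rule compact_continuous_image[OF continuous_on_subset[OF holomorphic_on_imp_continuous_on[OF hol] Hsub] cH])
  then obtain B where B: "\<And>y. y \<in> Hc \<Longrightarrow> cmod (g y) \<le> B"
    using compact_imp_bounded[of "g ` Hc"] unfolding bounded_iff by auto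
  define M where "M = nat \<lceil>B\<rceil>"
  have BM: "B \<le> real M" unfolding M_def by (rule real_nat_ceiling_ge)
  have bH: "ball (of_real q) \<rho> \<subseteq> Hc" unfolding Hc_def by auto
  have "u \<in> A5 q \<rho> M"
    unfolding A5_def
  proof (intro CollectI conjI exI[of _ g] ballI u)
    show "g holomorphic_on ball (of_real q) \<rho>" by (rule holomorphic_on_subset[OF hol]) (use Hsub bH in blast)
    show "cmod (g z) \<le> real M" if "z \<in> ball (of_real q) \<rho>" for z
      using B[of z] bH that BM by auto
    fix x assume x: "x \<in> {q-\<rho><..<q+\<rho>}"
    then have xI: "x \<in> {c..d}" using q\<rho> by auto
    have "q - \<rho> < x" "x < q + \<rho>" using x by auto
    then have "\<bar>x - x0\<bar> < r" using q\<rho>(6,7) by linarith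
    then have "complex_of_real x \<in> ball z0 r" using x0(2) real_in_ball[of x x0 r] by simp
    then show "g (complex_of_real x) = u x" using eq xI by blast
  qed
  moreover have "(q, \<rho>, M) \<in> Idx" unfolding Idx_def using q\<rho> by auto
  ultimately show ?thesis by force
qed

lemma back5:
  assumes i: "(q, \<rho>, M) \<in> Idx" and uA: "u \<in> A5 q \<rho> M"
  shows "u \<notin> U5 c d k"
proof -
  note ip = Idx_props[OF i]
  obtain g where u: "u \<in> Ck c d k" and hol: "g holomorphic_on ball (of_real q) \<rho>"
    and eq: "\<And>x. x \<in> {q-\<rho><..<q+\<rho>} \<Longrightarrow> g (of_real x) = u x"
    using uA unfolding A5_def by blast
  have qL: "of_real q \<in> Lc c d" unfolding Lc_def using ip by auto
  have "\<forall>x\<in>{c..d}. complex_of_real x \<in> ball (of_real q) \<rho> \<longrightarrow> g (complex_of_real x) = u x"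
  proof (intro ballI impI)
    fix x assume "x \<in> {c..d}" "complex_of_real x \<in> ball (of_real q) \<rho>"
    then have "\<bar>x - q\<bar> < \<rho>" using real_in_ball[of x q \<rho>] by simp
    then have "x \<in> {q-\<rho><..<q+\<rho>}" by (auto simp: abs_less_iff)
    then show "g (complex_of_real x) = u x" by (rule eq)
  qed
  then show ?thesis
    unfolding U5_def using qL hol ip(1) by blast
qed

lemma closed5:
  assumes i: "(q, \<rho>, M) \<in> Idx"
  shows "closedin (Ck_topology c d k) (A5 q \<rho> M)"
  unfolding topology_eq_metric CM.metric_closedin_iff_sequentially_closed
proof (intro conjI allI impI)
  note ip = Idx_props[OF i]
  show "A5 q \<rho> M \<subseteq> Ck c d k" unfolding A5_def by auto
  fix \<sigma> u assume a: "range \<sigma> \<subseteq> A5 q \<rho> M \<and> limitin CM.mtopology \<sigma> u sequentially"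
  have \<sigma>A: "\<And>n. \<sigma> n \<in> A5 q \<rho> M" using a by auto
  then have \<sigma>M: "\<And>n. \<sigma> n \<in> Ck c d k" unfolding A5_def by auto
  note cu = conv_unif[OF \<sigma>M conjunct2[OF a]]
  have "\<forall>n. \<exists>g. g holomorphic_on ball (of_real q) \<rho> \<and>
     (\<forall>z\<in>ball (of_real q) \<rho>. cmod (g z) \<le> real M) \<and> (\<forall>x\<in>{q-\<rho><..<q+\<rho>}. g (of_real x) = \<sigma> n x)"
    using \<sigma>A unfolding A5_def by blast
  then obtain g where g: "\<And>n. g n holomorphic_on ball (of_real q) \<rho>"
    "\<And>n z. z \<in> ball (of_real q) \<rho> \<Longrightarrow> cmod (g n z) \<le> real M"
    "\<And>n x. x \<in> {q-\<rho><..<q+\<rho>} \<Longrightarrow> g n (of_real x) = \<sigma> n x"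
    by metis
  have "\<exists>G. G holomorphic_on ball (of_real q) \<rho> \<and>
    (\<forall>z\<in>ball (of_real q) \<rho>. cmod (G z) \<le> real M) \<and> (\<forall>x\<in>{q-\<rho><..<q+\<rho>}. G (of_real x) = u x)"
  proof (rule closed_core_ball[OF ip(1) g(1,2,3)])
    fix x assume x: "x \<in> {q-\<rho><..<q+\<rho>}"
    then have xI: "x \<in> {c..d}" using ip(5) by auto
    show "(\<lambda>n. \<sigma> n x) \<longlonglongrightarrow> u x"
      unfolding LIMSEQ_def dist_norm
    proof (intro allI impI)
      fix e :: real assume "e > 0"
      then obtain N where "\<forall>n\<ge>N. \<forall>x\<in>{c..d}. cmod (\<sigma> n x - u x) < e" using cu(2) by blast
      then show "\<exists>N. \<forall>n\<ge>N. cmod (\<sigma> n x - u x) < e" using xI by blast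
    qed
  qed
  then show "u \<in> A5 q \<rho> M" unfolding A5_def using cu(1) by blast
qed

lemma interior5:
  assumes i: "(q, \<rho>, M) \<in> Idx"
  shows "Ck_topology c d k interior_of (A5 q \<rho> M) = {}"
proof (rule ccontr)
  assume "Ck_topology c d k interior_of (A5 q \<rho> M) \<noteq> {}"
  then obtain u where u: "u \<in> Ck_topology c d k interior_of (A5 q \<rho> M)" by blast
  note ip = Idx_props[OF i]
  obtain r where r: "r > 0" "CM.mball u r \<subseteq> A5 q \<rho> M" using interior_mball[OF u] by blast
  have uA: "u \<in> A5 q \<rho> M" using u interior_of_subset[of "Ck_topology c d k" "A5 q \<rho> M"] by (rule subsetD[rotated])
  then have uM: "u \<in> Ck c d k" unfolding A5_def by auto
  define w where "w = of_real q + \<i> * of_real (\<rho> / 2)"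
  have wI: "Im w \<noteq> 0" unfolding w_def using ip by simp
  obtain t0 where t0: "t0 > 0" "(\<lambda>x. u x + complex_of_real t0 * fw w x) \<in> CM.mball u r"
    using line_close[OF uM fw_Ck[OF wI] r(1)] by blast
  define v where "v = (\<lambda>x. u x + complex_of_real t0 * fw w x)"
  have vA: "v \<in> A5 q \<rho> M" using t0 r unfolding v_def by blast
  obtain g1 where g1: "g1 holomorphic_on ball (of_real q) \<rho>"
    "\<And>z. z \<in> ball (of_real q) \<rho> \<Longrightarrow> cmod (g1 z) \<le> real M"
    "\<And>x. x \<in> {q-\<rho><..<q+\<rho>} \<Longrightarrow> g1 (of_real x) = u x"
    using uA unfolding A5_def by blast
  obtain g2 where g2: "g2 holomorphic_on ball (of_real q) \<rho>"
    "\<And>z. z \<in> ball (of_real q) \<rho> \<Longrightarrow> cmod (g2 z) \<le> real M"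
    "\<And>x. x \<in> {q-\<rho><..<q+\<rho>} \<Longrightarrow> g2 (of_real x) = v x"
    using vA unfolding A5_def by blast
  define G where "G z = (g2 z - g1 z) / of_real t0" for z
  show False
  proof (rule noext_ball[OF ip(1), where F=G and w=w and B="(real M + real M) / t0"])
    show "G holomorphic_on ball (of_real q) \<rho>"
      unfolding G_def using t0 by (intro holomorphic_intros g1(1) g2(1)) auto
    fix z :: complex assume z: "z \<in> ball (of_real q) \<rho>"
    have "cmod (g2 z - g1 z) \<le> real M + real M"
      using g1(2)[OF z] g2(2)[OF z] norm_triangle_ineq4[of "g2 z" "g1 z"] by linarith
    then show "cmod (G z) \<le> (real M + real M) / t0"
      unfolding G_def using t0 by (simp add: norm_divide divide_right_mono)
  next
    fix x assume x: "x \<in> {q-\<rho><..<q+\<rho>}"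
    have xI: "x \<in> {c..d}" using x ip(5) by auto
    show "G (of_real x) = 1 / (of_real x - w)"
      unfolding G_def g1(3)[OF x] g2(3)[OF x] v_def fw_def using xI t0 by simp
  qed (simp add: w_def)
qed

end

theorem theorem4p13:
  fixes c d :: real and k :: enat
  assumes "c < d"
  shows "dense_gdelta (Ck_topology c d k) (U2 c d k) \<and>
         dense_gdelta (Ck_topology c d k) (U3 c d k) \<and>
         dense_gdelta (Ck_topology c d k) (U4 c d k) \<and>
         dense_gdelta (Ck_topology c d k) (U5 c d k)"
proof -
  interpret ck c d k by standard (rule assms)
  define X where "X = Ck_topology c d k"
  have X: "completely_metrizable_space X" unfolding X_def by (rule completely_metrizable)
  have tX: "topspace X = Ck c d k" unfolding X_def by (rule topspace_X)
  define \<A>2 where "\<A>2 = (\<lambda>(q, \<rho>, M). A2 q \<rho> M) ` Idx"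
  define \<A>3 where "\<A>3 = (\<lambda>(q, \<rho>, M). A3 q \<rho> M) ` Idx"
  define \<A>5 where "\<A>5 = (\<lambda>(q, \<rho>, M). A5 q \<rho> M) ` Idx"
  have c2: "countable \<A>2" unfolding \<A>2_def by (intro countable_image countable_Idx)
  have c3: "countable \<A>3" unfolding \<A>3_def by (intro countable_image countable_Idx)
  have c5: "countable \<A>5" unfolding \<A>5_def by (intro countable_image countable_Idx)
  have p2: "closedin X A \<and> X interior_of A = {}" if "A \<in> \<A>2" for A
    using that closed2 interior2 unfolding \<A>2_def X_def by auto
  have p3: "closedin X A \<and> X interior_of A = {}" if "A \<in> \<A>3" for A
    using that closed3 interior3 unfolding \<A>3_def X_def by auto
  have p5: "closedin X A \<and> X interior_of A = {}" if "A \<in> \<A>5" for A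
    using that closed5 interior5 unfolding \<A>5_def X_def by auto
  have e2: "U2 c d k = topspace X - \<Union>\<A>2"
  proof
    show "U2 c d k \<subseteq> topspace X - \<Union>\<A>2"
    proof
      fix u assume u: "u \<in> U2 c d k"
      have "u \<notin> A" if "A \<in> \<A>2" for A
        using that back2 u unfolding \<A>2_def by auto
      moreover have "u \<in> Ck c d k" using u unfolding U2_def by auto
      ultimately show "u \<in> topspace X - \<Union>\<A>2" using tX by auto
    qed
    show "topspace X - \<Union>\<A>2 \<subseteq> U2 c d k"
    proof
      fix u assume u: "u \<in> topspace X - \<Union>\<A>2"
      show "u \<in> U2 c d k"
      proof (rule ccontr)
        assume "u \<notin> U2 c d k"
        then obtain i where "i \<in> Idx" "u \<in> (\<lambda>(q, \<rho>, M). A2 q \<rho> M) i" using ext2 u tX by blast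
        then show False using u unfolding \<A>2_def by blast
      qed
    qed
  qed
  have e3: "U3 c d k = topspace X - \<Union>\<A>3"
  proof
    show "U3 c d k \<subseteq> topspace X - \<Union>\<A>3"
    proof
      fix u assume u: "u \<in> U3 c d k"
      have "u \<notin> A" if "A \<in> \<A>3" for A
        using that back3 u unfolding \<A>3_def by auto
      moreover have "u \<in> Ck c d k" using u unfolding U3_def by auto
      ultimately show "u \<in> topspace X - \<Union>\<A>3" using tX by auto
    qed
    show "topspace X - \<Union>\<A>3 \<subseteq> U3 c d k"
    proof
      fix u assume u: "u \<in> topspace X - \<Union>\<A>3"
      show "u \<in> U3 c d k"
      proof (rule ccontr)
        assume "u \<notin> U3 c d k"
        then obtain i where "i \<in> Idx" "u \<in> (\<lambda>(q, \<rho>, M). A3 q \<rho> M) i" using ext3 u tX by blast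
        then show False using u unfolding \<A>3_def by blast
      qed
    qed
  qed
  have e5: "U5 c d k = topspace X - \<Union>\<A>5"
  proof
    show "U5 c d k \<subseteq> topspace X - \<Union>\<A>5"
    proof
      fix u assume u: "u \<in> U5 c d k"
      have "u \<notin> A" if "A \<in> \<A>5" for A
        using that back5 u unfolding \<A>5_def by auto
      moreover have "u \<in> Ck c d k" using u unfolding U5_def by auto
      ultimately show "u \<in> topspace X - \<Union>\<A>5" using tX by auto
    qed
    show "topspace X - \<Union>\<A>5 \<subseteq> U5 c d k"
    proof
      fix u assume u: "u \<in> topspace X - \<Union>\<A>5"
      show "u \<in> U5 c d k"
      proof (rule ccontr)
        assume "u \<notin> U5 c d k"
        then obtain i where "i \<in> Idx" "u \<in> (\<lambda>(q, \<rho>, M). A5 q \<rho> M) i" using ext5 u tX by blast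
        then show False using u unfolding \<A>5_def by blast
      qed
    qed
  qed
  have e4: "U4 c d k = topspace X - \<Union>(\<A>2 \<union> \<A>3)"
    unfolding U4_def e2 e3 by auto
  have "dense_gdelta X (topspace X - \<Union>\<A>2)" by (rule dense_gdelta_complement[OF X c2 p2])
  moreover have "dense_gdelta X (topspace X - \<Union>\<A>3)" by (rule dense_gdelta_complement[OF X c3 p3])
  moreover have "dense_gdelta X (topspace X - \<Union>(\<A>2 \<union> \<A>3))"
    by (rule dense_gdelta_complement[OF X]) (use c2 c3 p2 p3 in auto)
  moreover have "dense_gdelta X (topspace X - \<Union>\<A>5)" by (rule dense_gdelta_complement[OF X c5 p5])
  ultimately show ?thesis unfolding e2 e3 e4 e5 X_def by blast
qed


end
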